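(* For every graph $G$, there is a graph $G'$ with the same number of vertices as $G$ such that $G$ is a subgraph of $G'$ and such that $\lfloor \mathrm{sp}\rfloor(G)=\mathrm{sp}(G')$.
   Context: All graphs are finite, have at least one vertex, have no loops, and may have multiple (parallel) edges. A path of order $k+1$ has $k$ edges and $k+1$ distinct vertices. A shortest path from $u$ to $v$ is a $u$–$v$ path such that no $u$–$v$ path has fewer vertices. A unique shortest path is a shortest $u$–$v$ path $P$ such that every $u$–$v$ path with the same number of vertices is identical to $P$, where two paths with different edge sequences are different even if their vertex sequences agree (so no edge of a unique shortest path has a parallel edge); a single vertex is a unique shortest path. The parade number $\mathrm{usp}(G)$ is the largest number of vertices of a unique shortest path in $G$; a parade is a unique shortest path attaining it. The spectator number is $\mathrm{sp}(G)=|V(G)|-\mathrm{usp}(G)$. A minor of a graph $H$ is any graph obtained from $H$ by a sequence of the operations: deleting an isolated vertex, deleting an edge, contracting an edge that has no edge parallel to it. The spectator floor $\lfloor \mathrm{sp}\rfloor(G)$ is the minimum of $\mathrm{sp}(H)$ over all graphs $H$ of which $G$ is a minor. *)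

theory Defs
  imports Main
begin

text \<open>Vertices and edges are labelled by natural
numbers; parallel edges are distinct edge labels with the same end set.
\<open>g_ends G e\<close> is the (two-element) set of end vertices of edge \<open>e\<close>.\<close>

record mgraph =
  g_verts :: "nat set"
  g_edges :: "nat set"
  g_ends  :: "nat \<Rightarrow> nat set"

definition wf_graph :: "mgraph \<Rightarrow> bool" where
  "wf_graph G \<longleftrightarrow> finite (g_verts G) \<and> g_verts G \<noteq> {} \<and> finite (g_edges G) \<and>
     (\<forall>e\<in>g_edges G. g_ends G e \<subseteq> g_verts G \<and> card (g_ends G e) = 2)"

definition is_path :: "mgraph \<Rightarrow> nat list \<times> nat list \<Rightarrow> nat \<Rightarrow> nat \<Rightarrow> bool" where
  "is_path G P u v \<longleftrightarrow>
     (let vs = fst P; es = snd P in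
      vs \<noteq> [] \<and> hd vs = u \<and> last vs = v \<and> distinct vs \<and> set vs \<subseteq> g_verts G \<and>
      length es + 1 = length vs \<and>
      (\<forall>i < length es. es ! i \<in> g_edges G \<and> g_ends G (es ! i) = {vs ! i, vs ! Suc i}))"

definition shortest_path :: "mgraph \<Rightarrow> nat list \<times> nat list \<Rightarrow> nat \<Rightarrow> nat \<Rightarrow> bool" where
  "shortest_path G P u v \<longleftrightarrow> is_path G P u v \<and>
     (\<forall>Q. is_path G Q u v \<longrightarrow> length (fst P) \<le> length (fst Q))"

definition unique_shortest_path :: "mgraph \<Rightarrow> nat list \<times> nat list \<Rightarrow> nat \<Rightarrow> nat \<Rightarrow> bool" where
  "unique_shortest_path G P u v \<longleftrightarrow> shortest_path G P u v \<and>
     (\<forall>Q. is_path G Q u v \<and> length (fst Q) = length (fst P) \<longrightarrow> Q = P)"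

definition usp :: "mgraph \<Rightarrow> nat" where
  "usp G = Max {length (fst P) | P u v. unique_shortest_path G P u v}"

definition sp :: "mgraph \<Rightarrow> nat" where
  "sp G = card (g_verts G) - usp G"

definition delete_vertex :: "mgraph \<Rightarrow> nat \<Rightarrow> mgraph" where
  "delete_vertex G v = G\<lparr>g_verts := g_verts G - {v}\<rparr>"

definition delete_edge :: "mgraph \<Rightarrow> nat \<Rightarrow> mgraph" where
  "delete_edge G e = G\<lparr>g_edges := g_edges G - {e}\<rparr>"

definition contract_edge :: "mgraph \<Rightarrow> nat \<Rightarrow> mgraph" where
  "contract_edge G e =
     (let u = Min (g_ends G e); v = Max (g_ends G e) in
      \<lparr> g_verts = g_verts G - {v}, g_edges = g_edges G - {e},
        g_ends = (\<lambda>f. (\<lambda>x. if x = v then u else x) ` g_ends G f) \<rparr>)"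

definition parallel :: "mgraph \<Rightarrow> nat \<Rightarrow> nat \<Rightarrow> bool" where
  "parallel G e f \<longleftrightarrow> e \<noteq> f \<and> f \<in> g_edges G \<and> g_ends G f = g_ends G e"

inductive minor_step :: "mgraph \<Rightarrow> mgraph \<Rightarrow> bool" where
  del_vertex: "\<lbrakk> v \<in> g_verts H; g_verts H - {v} \<noteq> {};
                 \<forall>e\<in>g_edges H. v \<notin> g_ends H e \<rbrakk> \<Longrightarrow> minor_step H (delete_vertex H v)"
| del_edge: "e \<in> g_edges H \<Longrightarrow> minor_step H (delete_edge H e)"
| contract: "\<lbrakk> e \<in> g_edges H; \<forall>f. \<not> parallel H e f \<rbrakk> \<Longrightarrow> minor_step H (contract_edge H e)"

definition graph_iso :: "mgraph \<Rightarrow> mgraph \<Rightarrow> bool" where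
  "graph_iso G H \<longleftrightarrow> (\<exists>f g. bij_betw f (g_verts G) (g_verts H) \<and>
      bij_betw g (g_edges G) (g_edges H) \<and>
      (\<forall>e\<in>g_edges G. g_ends H (g e) = f ` g_ends G e))"

definition is_minor :: "mgraph \<Rightarrow> mgraph \<Rightarrow> bool" where
  "is_minor G H \<longleftrightarrow> (\<exists>H'. minor_step\<^sup>*\<^sup>* H H' \<and> graph_iso G H')"

definition sp_floor :: "mgraph \<Rightarrow> nat" where
  "sp_floor G = Inf {sp H | H. wf_graph H \<and> is_minor G H}"

definition subgraph :: "mgraph \<Rightarrow> mgraph \<Rightarrow> bool" where
  "subgraph G H \<longleftrightarrow> g_verts G \<subseteq> g_verts H \<and> g_edges G \<subseteq> g_edges H \<and>
     (\<forall>e\<in>g_edges G. g_ends H e = g_ends G e)"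

end

theory Submission
  imports Defs
begin

fun wk :: "mgraph \<Rightarrow> nat list \<Rightarrow> nat list \<Rightarrow> bool" where
  "wk H [a] [] = (a \<in> g_verts H)"
| "wk H (a # b # vs) (e # es) = (a \<in> g_verts H \<and> e \<in> g_edges H \<and> g_ends H e = {a, b} \<and> wk H (b # vs) es)"
| "wk H _ _ = False"

lemma wk_iff:
  "wk H vs es \<longleftrightarrow> vs \<noteq> [] \<and> set vs \<subseteq> g_verts H \<and> length es + 1 = length vs \<and>
     (\<forall>i<length es. es ! i \<in> g_edges H \<and> g_ends H (es ! i) = {vs ! i, vs ! Suc i})"
proof (induction H vs es rule: wk.induct)
  case (1 H a)
  then show ?case by auto
next
  case (2 H a b vs e es)
  show ?case
  proof
    assume A: "wk H (a # b # vs) (e # es)"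
    then have IH: "set (b # vs) \<subseteq> g_verts H \<and> length es + 1 = length (b # vs) \<and>
     (\<forall>i<length es. es ! i \<in> g_edges H \<and> g_ends H (es ! i) = {(b # vs) ! i, (b # vs) ! Suc i})"
      using 2 by auto
    show "a # b # vs \<noteq> [] \<and> set (a # b # vs) \<subseteq> g_verts H \<and> length (e # es) + 1 = length (a # b # vs) \<and>
     (\<forall>i<length (e # es). (e # es) ! i \<in> g_edges H \<and> g_ends H ((e # es) ! i) = {(a # b # vs) ! i, (a # b # vs) ! Suc i})"
    proof (intro conjI allI impI)
      fix i assume "i < length (e # es)"
      then show "(e # es) ! i \<in> g_edges H" using A IH by (cases i) auto
      show "g_ends H ((e # es) ! i) = {(a # b # vs) ! i, (a # b # vs) ! Suc i}"
        using A IH \<open>i < length (e # es)\<close> by (cases i) auto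
    qed (use A IH in auto)
  next
    assume B: "a # b # vs \<noteq> [] \<and> set (a # b # vs) \<subseteq> g_verts H \<and> length (e # es) + 1 = length (a # b # vs) \<and>
     (\<forall>i<length (e # es). (e # es) ! i \<in> g_edges H \<and> g_ends H ((e # es) ! i) = {(a # b # vs) ! i, (a # b # vs) ! Suc i})"
    have "wk H (b # vs) es"
    proof -
      have "\<forall>i<length es. es ! i \<in> g_edges H \<and> g_ends H (es ! i) = {(b # vs) ! i, (b # vs) ! Suc i}"
      proof (intro allI impI)
        fix i assume "i < length es"
        then show "es ! i \<in> g_edges H \<and> g_ends H (es ! i) = {(b # vs) ! i, (b # vs) ! Suc i}"
          using B[THEN conjunct2, THEN conjunct2, THEN conjunct2, rule_format, of "Suc i"] by simp
      qed
      then show ?thesis using 2 B by auto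
    qed
    moreover have "e \<in> g_edges H \<and> g_ends H e = {a, b}"
      using B[THEN conjunct2, THEN conjunct2, THEN conjunct2, rule_format, of 0] by simp
    ultimately show "wk H (a # b # vs) (e # es)" using B by simp
  qed
qed auto

definition walk :: "mgraph \<Rightarrow> nat list \<times> nat list \<Rightarrow> nat \<Rightarrow> nat \<Rightarrow> bool" where
  "walk H P a b \<longleftrightarrow> wk H (fst P) (snd P) \<and> fst P \<noteq> [] \<and> hd (fst P) = a \<and> last (fst P) = b"

lemma is_path_walk: "is_path H P a b \<longleftrightarrow> walk H P a b \<and> distinct (fst P)"
  unfolding is_path_def walk_def wk_iff Let_def by auto

lemma wk_nonempty: "wk H vs es \<Longrightarrow> vs \<noteq> []"
  by (simp add: wk_iff)

lemma wk_length: "wk H vs es \<Longrightarrow> length vs = Suc (length es)"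
  by (simp add: wk_iff)

lemma wk_set: "wk H vs es \<Longrightarrow> set vs \<subseteq> g_verts H"
  by (simp add: wk_iff)

lemma wk_append:
  "wk H vs1 es1 \<Longrightarrow> wk H (last vs1 # ws) es2 \<Longrightarrow> wk H (vs1 @ ws) (es1 @ es2)"
proof (induction H vs1 es1 rule: wk.induct)
  case (1 H a)
  then show ?case by simp
next
  case (2 H a b vs e es)
  then show ?case by simp
qed auto

lemma wk_split:
  "wk H (xs @ c # ys) es \<Longrightarrow> wk H (xs @ [c]) (take (length xs) es) \<and> wk H (c # ys) (drop (length xs) es)"
proof (induction xs arbitrary: es)
  case Nil
  then show ?case
    by (cases ys; cases es) auto
next
  case (Cons a xs)
  show ?case
  proof (cases xs)
    case Nil
    then show ?thesis using Cons.prems by (cases es) (auto dest: wk_set)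
  next
    case (Cons b xs')
    then show ?thesis using Cons.prems Cons.IH
      by (cases es) auto
  qed
qed

lemma wk_single: "e \<in> g_edges H \<Longrightarrow> g_ends H e = {a, b} \<Longrightarrow> a \<in> g_verts H \<Longrightarrow> b \<in> g_verts H \<Longrightarrow> wk H [a, b] [e]"
  by simp

lemma wk_rev: "wk H vs es \<Longrightarrow> wk H (rev vs) (rev es)"
proof (induction H vs es rule: wk.induct)
  case (1 H a)
  then show ?case by simp
next
  case (2 H a b vs e es)
  then have W: "wk H (rev vs @ [b]) (rev es)" and a: "a \<in> g_verts H" and e: "e \<in> g_edges H" "g_ends H e = {a, b}"
    and bV: "b \<in> g_verts H"
    using wk_set[of H "b # vs" es] by auto
  have "wk H (last (rev vs @ [b]) # [a]) [e]" using e a bV by (auto simp: insert_commute)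
  from wk_append[OF W this] show ?case by simp
qed auto

lemma walk_rev: "walk H (vs, es) a b \<Longrightarrow> walk H (rev vs, rev es) b a"
  unfolding walk_def by (auto simp: wk_rev hd_rev last_rev)

lemma walk_append:
  assumes "walk H (vs1, es1) a b" "walk H (vs2, es2) b c"
  shows "walk H (vs1 @ tl vs2, es1 @ es2) a c"
proof -
  obtain ws where v2: "vs2 = b # ws" using assms(2) unfolding walk_def by (cases vs2) auto
  have "wk H (last vs1 # ws) es2" using assms v2 unfolding walk_def by auto
  then have "wk H (vs1 @ ws) (es1 @ es2)" using wk_append assms(1) unfolding walk_def by auto
  then show ?thesis using assms v2 unfolding walk_def by (cases ws) auto
qed

lemma walk_shorten:
  assumes "walk H (vs, es) a b" "\<not> distinct vs"
  shows "\<exists>vs' es'. walk H (vs', es') a b \<and> length es' < length es"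
proof -
  obtain xs ys zs c where d: "vs = xs @ [c] @ ys @ [c] @ zs"
    using not_distinct_decomp[OF assms(2)] by blast
  have W: "wk H vs es" using assms unfolding walk_def by auto
  have s1: "wk H (xs @ [c]) (take (length xs) es)" and r1: "wk H (c # ys @ c # zs) (drop (length xs) es)"
    using wk_split[of H xs c "ys @ c # zs" es] W d by auto
  have s2: "wk H (c # zs) (drop (length (c # ys)) (drop (length xs) es))"
    using wk_split[of H "c # ys" c zs "drop (length xs) es"] r1 by auto
  have W2: "wk H ((xs @ [c]) @ zs) (take (length xs) es @ drop (length (c # ys)) (drop (length xs) es))"
    using wk_append[OF s1] s2 by simp
  have L: "length vs = Suc (length es)" using wk_length[OF W] .
  have "length (take (length xs) es @ drop (length (c # ys)) (drop (length xs) es)) < length es"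
    using L d by simp
  moreover have "hd ((xs @ [c]) @ zs) = a" using assms d unfolding walk_def by (cases xs) auto
  moreover have "last ((xs @ [c]) @ zs) = b" using assms d unfolding walk_def by (cases zs) auto
  ultimately show ?thesis using W2 unfolding walk_def
    by (intro exI[of _ "(xs @ [c]) @ zs"] exI[of _ "take (length xs) es @ drop (length (c # ys)) (drop (length xs) es)"]) auto
qed

lemma walk_to_path:
  "walk H (vs, es) a b \<Longrightarrow> \<exists>vs' es'. is_path H (vs', es') a b \<and> length es' \<le> length es \<and>
      (\<not> distinct vs \<longrightarrow> length es' < length es)"
proof (induction "length es" arbitrary: vs es rule: less_induct)
  case less
  show ?case
  proof (cases "distinct vs")
    case True
    then show ?thesis using less.prems by (auto simp: is_path_walk)
  next
    case False
    obtain vs1 es1 where "walk H (vs1, es1) a b" "length es1 < length es"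
      using walk_shorten[OF less.prems False] by blast
    with less.hyps[of es1 vs1] show ?thesis using False by fastforce
  qed
qed

definition D :: "mgraph \<Rightarrow> nat \<Rightarrow> nat \<Rightarrow> nat" where
  "D H a b = (LEAST n. n = card (g_verts H) \<or> (\<exists>vs es. walk H (vs, es) a b \<and> length es = n))"

lemma D_le_card: "D H a b \<le> card (g_verts H)"
  unfolding D_def by (rule Least_le) simp

lemma D_le_walk: "walk H (vs, es) a b \<Longrightarrow> D H a b \<le> length es"
  unfolding D_def by (rule Least_le) blast

lemma D_walk:
  assumes "D H a b < card (g_verts H)"
  shows "\<exists>vs es. walk H (vs, es) a b \<and> length es = D H a b"
proof -
  have "D H a b = card (g_verts H) \<or> (\<exists>vs es. walk H (vs, es) a b \<and> length es = D H a b)"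
    unfolding D_def by (rule LeastI[of _ "card (g_verts H)"]) simp
  with assms show ?thesis by auto
qed

lemma D_sym_le: "D H a b \<le> D H b a"
proof (cases "D H b a < card (g_verts H)")
  case True
  then obtain vs es where "walk H (vs, es) b a" "length es = D H b a" using D_walk by blast
  then show ?thesis using D_le_walk[OF walk_rev] by fastforce
next
  case False
  then show ?thesis using D_le_card[of H a b] by simp
qed

lemma D_sym: "D H a b = D H b a"
  using D_sym_le[of H a b] D_sym_le[of H b a] by simp

lemma D_tri: "D H a c \<le> D H a b + D H b c"
proof (cases "D H a b < card (g_verts H) \<and> D H b c < card (g_verts H)")
  case True
  then obtain vs1 es1 vs2 es2 where "walk H (vs1, es1) a b" "length es1 = D H a b"
    "walk H (vs2, es2) b c" "length es2 = D H b c" using D_walk by meson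
  then show ?thesis using D_le_walk[OF walk_append] by fastforce
next
  case False
  then show ?thesis using D_le_card[of H a c] by auto
qed

lemma D_refl: "a \<in> g_verts H \<Longrightarrow> D H a a = 0"
  using D_le_walk[of H "[a]" "[]" a a] by (simp add: walk_def)

lemma D_zero: "D H a b = 0 \<Longrightarrow> g_verts H \<noteq> {} \<Longrightarrow> finite (g_verts H) \<Longrightarrow> a = b"
proof -
  assume A: "D H a b = 0" "g_verts H \<noteq> {}" "finite (g_verts H)"
  then have "D H a b < card (g_verts H)" by (simp add: card_gt_0_iff)
  then obtain vs es where "walk H (vs, es) a b" "length es = 0" using D_walk A(1) by metis
  then show "a = b" unfolding walk_def by (cases vs) (auto simp: wk_iff)
qed

lemma D_edge:
  assumes "wf_graph H" "e \<in> g_edges H" "g_ends H e = {a, b}"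
  shows "D H a b \<le> 1"
proof -
  have "a \<in> g_verts H" "b \<in> g_verts H" using assms unfolding wf_graph_def by auto
  then have "walk H ([a, b], [e]) a b" using assms(2,3) unfolding walk_def by simp
  from D_le_walk[OF this] show ?thesis by simp
qed

lemma D_lip1:
  assumes "wf_graph H" "e \<in> g_edges H" "g_ends H e = {a, b}"
  shows "D H a c \<le> D H b c + 1"
  using D_tri[of H a c b] D_edge[OF assms] by simp

lemma D_lip2:
  assumes "wf_graph H" "e \<in> g_edges H" "g_ends H e = {a, b}"
  shows "D H c a \<le> D H c b + 1"
  using D_lip1[OF assms, of c] D_sym by metis

lemma path_len_card:
  assumes "wf_graph H" "is_path H P a b"
  shows "length (fst P) \<le> card (g_verts H)"
proof -
  have "distinct (fst P)" "set (fst P) \<subseteq> g_verts H" using assms(2) unfolding is_path_def Let_def by auto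
  then show ?thesis using assms(1) unfolding wf_graph_def
    by (metis card_mono distinct_card)
qed

lemma usp_set_finite:
  assumes "wf_graph H"
  shows "finite {length (fst P) | P u v. unique_shortest_path H P u v}"
proof -
  have "{length (fst P) | P u v. unique_shortest_path H P u v} \<subseteq> {..card (g_verts H)}"
    using path_len_card[OF assms] unfolding unique_shortest_path_def shortest_path_def by auto
  then show ?thesis using finite_subset by blast
qed

lemma single_usp:
  assumes "a \<in> g_verts H"
  shows "unique_shortest_path H ([a], []) a a"
proof -
  have p: "is_path H ([a], []) a a" using assms unfolding is_path_def by simp
  have "\<forall>Q. is_path H Q a a \<longrightarrow> length (fst ([a], [] :: nat list)) \<le> length (fst Q)"
    unfolding is_path_def Let_def by (auto simp: Suc_le_eq)
  moreover have "\<forall>Q. is_path H Q a a \<and> length (fst Q) = length (fst ([a], [] :: nat list)) \<longrightarrow> Q = ([a], [])"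
  proof (intro allI impI)
    fix Q assume A: "is_path H Q a a \<and> length (fst Q) = length (fst ([a], [] :: nat list))"
    then obtain vs es where Q: "Q = (vs, es)" by (cases Q)
    then have "length vs = 1" "hd vs = a" "length es + 1 = length vs" using A unfolding is_path_def Let_def by auto
    then show "Q = ([a], [])" using Q by (cases vs) auto
  qed
  ultimately show ?thesis using p unfolding unique_shortest_path_def shortest_path_def by blast
qed

lemma usp_ge:
  assumes "wf_graph H" "unique_shortest_path H P a b"
  shows "length (fst P) \<le> usp H"
proof -
  have "length (fst P) \<in> {length (fst P) | P u v. unique_shortest_path H P u v}" using assms(2) by blast
  then show ?thesis unfolding usp_def using usp_set_finite[OF assms(1)] by (intro Max_ge)
qed

lemma usp_obtain:
  assumes "wf_graph H"
  shows "\<exists>P a b. unique_shortest_path H P a b \<and> length (fst P) = usp H"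
proof -
  obtain a where "a \<in> g_verts H" using assms unfolding wf_graph_def by auto
  then have ne: "{length (fst P) | P u v. unique_shortest_path H P u v} \<noteq> {}" using single_usp by fastforce
  have "usp H \<in> {length (fst P) | P u v. unique_shortest_path H P u v}"
    using Max_in[OF usp_set_finite[OF assms] ne] unfolding usp_def .
  then obtain P a b where "usp H = length (fst P)" "unique_shortest_path H P a b" by blast
  then show ?thesis by metis
qed

lemma usp_pos:
  assumes "wf_graph H"
  shows "1 \<le> usp H"
proof -
  obtain a where "a \<in> g_verts H" using assms unfolding wf_graph_def by auto
  from usp_ge[OF assms single_usp[OF this]] show ?thesis by simp
qed

lemma usp_le_card:
  assumes "wf_graph H"
  shows "usp H \<le> card (g_verts H)"
  using usp_obtain[OF assms] path_len_card[OF assms]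
  unfolding unique_shortest_path_def shortest_path_def by metis

lemma walk_prefix:
  assumes "wk H vs es" "i \<le> length es"
  shows "walk H (take i vs @ [vs ! i], take i es) (vs ! 0) (vs ! i)"
proof -
  have L: "length vs = Suc (length es)" using wk_length[OF assms(1)] .
  have d: "vs = take i vs @ vs ! i # drop (Suc i) vs" using L assms(2) by (simp add: id_take_nth_drop)
  have "wk H (take i vs @ [vs ! i]) (take (length (take i vs)) es)"
    using wk_split[of H "take i vs" "vs ! i" "drop (Suc i) vs" es] d assms(1) by simp
  moreover have "length (take i vs) = i" using L assms(2) by simp
  moreover have "hd (take i vs @ [vs ! i]) = vs ! 0" using L assms(2)
    by (cases i) (auto simp: hd_conv_nth nth_append)
  ultimately show ?thesis unfolding walk_def by simp
qed

lemma walk_suffix: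
  assumes "wk H vs es" "i \<le> length es"
  shows "walk H (drop i vs, drop i es) (vs ! i) (vs ! length es)"
proof -
  have L: "length vs = Suc (length es)" using wk_length[OF assms(1)] .
  have d: "vs = take i vs @ vs ! i # drop (Suc i) vs" using L assms(2) by (simp add: id_take_nth_drop)
  have "wk H (vs ! i # drop (Suc i) vs) (drop (length (take i vs)) es)"
    using wk_split[of H "take i vs" "vs ! i" "drop (Suc i) vs" es] d assms(1) by simp
  moreover have "length (take i vs) = i" using L assms(2) by simp
  moreover have "drop i vs = vs ! i # drop (Suc i) vs" using L assms(2) by (simp add: Cons_nth_drop_Suc)
  moreover have "last (drop i vs) = vs ! length es" using L assms(2) by (simp add: last_conv_nth)
  ultimately show ?thesis unfolding walk_def by simp
qed

locale pctx =
  fixes H :: mgraph and vs es :: "nat list"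
  assumes wfH: "wf_graph H"
    and uspP: "unique_shortest_path H (vs, es) (hd vs) (last vs)"
begin

abbreviation "m \<equiv> length es"
definition "X z = D H (vs ! 0) z"
definition "Y z = D H z (vs ! m)"

lemma pathP: "is_path H (vs, es) (hd vs) (last vs)"
  using uspP unfolding unique_shortest_path_def shortest_path_def by auto

lemma wkP: "wk H vs es" and distP: "distinct vs"
  using pathP unfolding is_path_walk walk_def by auto

lemma lenP: "length vs = Suc m" using wk_length[OF wkP] .

lemma neP: "vs \<noteq> []" using lenP by auto
lemma hdP: "hd vs = vs ! 0" using neP by (simp add: hd_conv_nth)
lemma lastP: "last vs = vs ! m" using neP lenP by (simp add: last_conv_nth)

lemma setP: "set vs \<subseteq> g_verts H" using wk_set[OF wkP] .

lemma card_big: "Suc m \<le> card (g_verts H)"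
  using path_len_card[OF wfH pathP] lenP by simp

lemma vne: "g_verts H \<noteq> {}" "finite (g_verts H)" using wfH unfolding wf_graph_def by auto

lemma X_le: "i \<le> m \<Longrightarrow> X (vs ! i) \<le> i"
  using D_le_walk[OF walk_prefix[OF wkP]] unfolding X_def by fastforce

lemma Y_le: "i \<le> m \<Longrightarrow> Y (vs ! i) \<le> m - i"
  using D_le_walk[OF walk_suffix[OF wkP]] unfolding Y_def by fastforce

lemma shortest: "is_path H Q (vs ! 0) (vs ! m) \<Longrightarrow> m \<le> length (snd Q)"
proof -
  assume "is_path H Q (vs ! 0) (vs ! m)"
  then have "length vs \<le> length (fst Q)" "length (fst Q) = Suc (length (snd Q))"
    using uspP hdP lastP unfolding unique_shortest_path_def shortest_path_def is_path_def Let_def by auto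
  then show ?thesis using lenP by simp
qed

lemma F6:
  assumes "X z \<le> j" "Y z + j \<le> m"
  shows "z = vs ! j"
proof -
  have "X z < card (g_verts H)" "Y z < card (g_verts H)" using assms card_big by auto
  then obtain vs1 es1 vs2 es2 where w1: "walk H (vs1, es1) (vs ! 0) z" "length es1 = X z"
    and w2: "walk H (vs2, es2) z (vs ! m)" "length es2 = Y z"
    using D_walk unfolding X_def Y_def by metis
  have W: "walk H (vs1 @ tl vs2, es1 @ es2) (vs ! 0) (vs ! m)" using walk_append[OF w1(1) w2(1)] .
  obtain vs' es' where p: "is_path H (vs', es') (vs ! 0) (vs ! m)" "length es' \<le> length (es1 @ es2)"
    "\<not> distinct (vs1 @ tl vs2) \<longrightarrow> length es' < length (es1 @ es2)"
    using walk_to_path[OF W] by blast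
  have "m \<le> length es'" using shortest[OF p(1)] by simp
  then have dist: "distinct (vs1 @ tl vs2)" and len: "length (es1 @ es2) = m" and xj: "X z = j"
    using p(2,3) w1(2) w2(2) assms by auto
  have pp: "is_path H (vs1 @ tl vs2, es1 @ es2) (hd vs) (last vs)"
    using W dist hdP lastP by (simp add: is_path_walk)
  have "wk H (vs1 @ tl vs2) (es1 @ es2)" using W unfolding walk_def by simp
  from wk_length[OF this] have "length (vs1 @ tl vs2) = Suc (length (es1 @ es2))" .
  then have "length (fst (vs1 @ tl vs2, es1 @ es2)) = length (fst (vs, es))" using len lenP by simp
  then have eq: "(vs1 @ tl vs2, es1 @ es2) = (vs, es)"
    using uspP pp unfolding unique_shortest_path_def by blast
  have "length vs1 = Suc j" using w1 xj wk_length[of H vs1 es1] unfolding walk_def by simp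
  moreover have "last vs1 = z" "vs1 \<noteq> []" using w1 unfolding walk_def by auto
  ultimately have "(vs1 @ tl vs2) ! j = z" by (simp add: nth_append last_conv_nth)
  then show ?thesis using eq by simp
qed

lemma F6j: "X z \<le> j \<Longrightarrow> Y z + j \<le> m \<Longrightarrow> j \<le> m"
  by simp

lemma XY_ge: "m \<le> X z + Y z"
proof (rule ccontr)
  assume "\<not> m \<le> X z + Y z"
  then have "z = vs ! X z" "z = vs ! Suc (X z)" using F6[of z "X z"] F6[of z "Suc (X z)"] by auto
  moreover have "Suc (X z) < length vs" using \<open>\<not> m \<le> X z + Y z\<close> lenP by simp
  ultimately show False using distP nth_eq_iff_index_eq[OF distP, of "X z" "Suc (X z)"] by simp
qed

lemma XY_gt: "z \<notin> set vs \<Longrightarrow> Suc m \<le> X z + Y z"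
proof (rule ccontr)
  assume "z \<notin> set vs" "\<not> Suc m \<le> X z + Y z"
  then have "z = vs ! X z" using F6[of z "X z"] by auto
  moreover have "X z < length vs" using \<open>\<not> Suc m \<le> X z + Y z\<close> lenP by simp
  ultimately show False using \<open>z \<notin> set vs\<close> by (metis nth_mem)
qed

lemma X_eq: "i \<le> m \<Longrightarrow> X (vs ! i) = i"
proof (rule ccontr)
  assume A: "i \<le> m" "X (vs ! i) \<noteq> i"
  then have "X (vs ! i) < i" using X_le by (simp add: order_less_le)
  moreover have "Y (vs ! i) + X (vs ! i) \<le> m" using Y_le[OF A(1)] calculation A(1) by simp
  ultimately have "vs ! i = vs ! X (vs ! i)" using F6 by blast
  then show False using A distP lenP \<open>X (vs ! i) < i\<close> by (simp add: nth_eq_iff_index_eq)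
qed

lemma Y_eq: "i \<le> m \<Longrightarrow> Y (vs ! i) = m - i"
proof (rule ccontr)
  assume A: "i \<le> m" "Y (vs ! i) \<noteq> m - i"
  then have lt: "Y (vs ! i) < m - i" using Y_le by (simp add: order_less_le)
  have "X (vs ! i) \<le> m - Y (vs ! i)" "Y (vs ! i) + (m - Y (vs ! i)) \<le> m" using X_eq[OF A(1)] lt by auto
  then have "vs ! i = vs ! (m - Y (vs ! i))" using F6 by blast
  then show False using A distP lenP lt by (simp add: nth_eq_iff_index_eq)
qed

lemma F7:
  assumes "g \<in> g_edges H" "g_ends H g = g_ends H (es ! i)" "i < m"
  shows "g = es ! i"
proof -
  have "is_path H (vs, es[i := g]) (hd vs) (last vs)"
    using pathP assms unfolding is_path_def Let_def by (auto simp: nth_list_update)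
  moreover have "length (fst (vs, es[i := g])) = length (fst (vs, es))" by simp
  ultimately have "(vs, es[i := g]) = (vs, es)" using uspP unfolding unique_shortest_path_def by blast
  then have "es[i := g] ! i = es ! i" by simp
  then show ?thesis using assms(3) by simp
qed

lemma edgeP: "i < m \<Longrightarrow> es ! i \<in> g_edges H \<and> g_ends H (es ! i) = {vs ! i, vs ! Suc i}"
  using wkP by (simp add: wk_iff)

lemma lipX: "g \<in> g_edges H \<Longrightarrow> g_ends H g = {a, b} \<Longrightarrow> X a \<le> X b + 1"
  unfolding X_def using D_lip2[OF wfH] by blast
lemma lipY: "g \<in> g_edges H \<Longrightarrow> g_ends H g = {a, b} \<Longrightarrow> Y a \<le> Y b + 1"
  unfolding Y_def using D_lip1[OF wfH] by blast

lemma F8: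
  assumes "g \<in> g_edges H" "g_ends H g = {vs ! a, vs ! b}" "a \<le> m" "b \<le> m"
  shows "(b = Suc a \<and> g = es ! a) \<or> (a = Suc b \<and> g = es ! b)"
proof -
  have e2: "g_ends H g = {vs ! b, vs ! a}" using assms(2) by blast
  have "X (vs ! a) \<le> X (vs ! b) + 1" "X (vs ! b) \<le> X (vs ! a) + 1"
    using lipX[OF assms(1,2)] lipX[OF assms(1) e2] by auto
  then have c: "a \<le> b + 1" "b \<le> a + 1" using X_eq assms(3,4) by auto
  have "card (g_ends H g) = 2" using wfH assms(1) unfolding wf_graph_def by auto
  then have "vs ! a \<noteq> vs ! b" using assms(2) by auto
  then have "a \<noteq> b" by auto
  then consider "b = Suc a" | "a = Suc b" using c by linarith
  then show ?thesis
  proof cases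
    case 1
    then have "g_ends H g = g_ends H (es ! a)" using assms(2,4) edgeP[of a] by simp
    then show ?thesis using F7[OF assms(1)] 1 assms(4) by simp
  next
    case 2
    then have "g_ends H g = g_ends H (es ! b)" using assms(2,3) edgeP[of b] by (simp add: insert_commute)
    then show ?thesis using F7[OF assms(1)] 2 assms(3) by simp
  qed
qed

end

lemma certificate:
  assumes wf: "wf_graph H'"
    and W: "wk H' ws fs" and dist: "distinct ws" and lm: "length fs = m'"
    and Lx: "\<And>g a b. g \<in> g_edges H' \<Longrightarrow> g_ends H' g = {a, b} \<Longrightarrow> px a \<le> px b + 1"
    and Ly: "\<And>g a b. g \<in> g_edges H' \<Longrightarrow> g_ends H' g = {a, b} \<Longrightarrow> py a \<le> py b + 1"
    and x0: "px (ws ! 0) = 0" and y0: "py (ws ! m') = 0"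
    and S: "\<And>z j. z \<in> g_verts H' \<Longrightarrow> px z \<le> j \<Longrightarrow> py z + j \<le> m' \<Longrightarrow> z = ws ! j"
    and E: "\<And>j g. j < m' \<Longrightarrow> g \<in> g_edges H' \<Longrightarrow> g_ends H' g = g_ends H' (fs ! j) \<Longrightarrow> g = fs ! j"
  shows "unique_shortest_path H' (ws, fs) (ws ! 0) (ws ! m')"
proof -
  have lw: "length ws = Suc m'" using wk_length[OF W] lm by simp
  have key: "Q = (ws, fs)" if Q: "is_path H' Q (ws ! 0) (ws ! m')" "length (snd Q) \<le> m'" for Q
  proof -
    obtain qs gs where Qd: "Q = (qs, gs)" by (cases Q)
    have wq: "wk H' qs gs" "hd qs = ws ! 0" "last qs = ws ! m'" "qs \<noteq> []"
      using Q Qd unfolding is_path_walk walk_def by auto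
    define n where "n = length gs"
    have lq: "length qs = Suc n" using wk_length[OF wq(1)] n_def by simp
    have edges: "\<And>i. i < n \<Longrightarrow> gs ! i \<in> g_edges H' \<and> g_ends H' (gs ! i) = {qs ! i, qs ! Suc i}"
      using wq(1) n_def by (simp add: wk_iff)
    have q0: "qs ! 0 = ws ! 0" using wq(2,4) by (simp add: hd_conv_nth)
    have qn: "qs ! n = ws ! m'" using wq(3,4) lq by (simp add: last_conv_nth)
    have fx: "px (qs ! i) \<le> i" if "i \<le> n" for i
      using that
    proof (induction i)
      case 0
      then show ?case using q0 x0 by simp
    next
      case (Suc i)
      then have i: "i < n" by simp
      have "g_ends H' (gs ! i) = {qs ! Suc i, qs ! i}" using edges[OF i] by (simp add: insert_commute)
      then have "px (qs ! Suc i) \<le> px (qs ! i) + 1" using edges[OF i] Lx by blast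
      then show ?case using Suc by simp
    qed
    have fy: "\<forall>i. n - i = d \<and> i \<le> n \<longrightarrow> py (qs ! i) \<le> d" for d
    proof (induction d)
      case 0
      then show ?case using qn y0 by (auto intro: le_antisym)
    next
      case (Suc d)
      show ?case
      proof (intro allI impI)
        fix i assume A: "n - i = Suc d \<and> i \<le> n"
        then have i: "i < n" by arith
        then have "py (qs ! i) \<le> py (qs ! Suc i) + 1" using edges[OF i] Ly by blast
        moreover have "n - Suc i = d \<and> Suc i \<le> n" using A by arith
        then have "py (qs ! Suc i) \<le> d" using Suc.IH by blast
        ultimately show "py (qs ! i) \<le> Suc d" by simp
      qed
    qed
    have nm: "n \<le> m'" using Q Qd n_def by simp
    have eqv: "qs ! i = ws ! i" if "i \<le> n" for i
    proof -
      have "qs ! i \<in> g_verts H'" using wk_set[OF wq(1)] lq that by auto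
      moreover have "py (qs ! i) + i \<le> m'" using fy[of "n - i"] that nm by fastforce
      ultimately show ?thesis using S fx[OF that] by blast
    qed
    have "ws ! n = ws ! m'" using eqv[of n] qn by simp
    then have nm': "n = m'" using dist lw nm by (simp add: nth_eq_iff_index_eq)
    have qs: "qs = ws" using eqv lq lw nm' by (intro nth_equalityI) auto
    have "gs = fs"
    proof (intro nth_equalityI)
      show "length gs = length fs" using n_def nm' lm by simp
      fix j assume "j < length gs"
      then have j: "j < m'" using n_def nm' by simp
      have "fs ! j \<in> g_edges H' \<and> g_ends H' (fs ! j) = {ws ! j, ws ! Suc j}" using W lm j by (simp add: wk_iff)
      then show "gs ! j = fs ! j" using edges[of j] j nm' qs E[OF j] by auto
    qed
    then show ?thesis using Qd qs by simp
  qed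
  have P: "is_path H' (ws, fs) (ws ! 0) (ws ! m')"
    using W dist lw lm unfolding is_path_walk walk_def by (auto simp: hd_conv_nth last_conv_nth wk_nonempty)
  have "shortest_path H' (ws, fs) (ws ! 0) (ws ! m')"
    unfolding shortest_path_def
  proof (intro conjI P allI impI)
    fix Q assume Q: "is_path H' Q (ws ! 0) (ws ! m')"
    show "length (fst (ws, fs)) \<le> length (fst Q)"
    proof (rule ccontr)
      assume "\<not> ?thesis"
      then have "length (snd Q) < m'" using Q lw unfolding is_path_def Let_def by auto
      then show False using key[OF Q] lm by auto
    qed
  qed
  moreover have "\<forall>Q. is_path H' Q (ws ! 0) (ws ! m') \<and> length (fst Q) = length (fst (ws, fs)) \<longrightarrow> Q = (ws, fs)"
  proof (intro allI impI)
    fix Q assume Q: "is_path H' Q (ws ! 0) (ws ! m') \<and> length (fst Q) = length (fst (ws, fs))"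
    then have "length (snd Q) \<le> m'" using lw unfolding is_path_def Let_def by auto
    then show "Q = (ws, fs)" using key Q by blast
  qed
  ultimately show ?thesis unfolding unique_shortest_path_def by blast
qed

definition rho :: "nat \<Rightarrow> nat \<Rightarrow> nat \<Rightarrow> nat" where
  "rho u v x = (if x = v then u else x)"

definition merge :: "mgraph \<Rightarrow> nat \<Rightarrow> nat \<Rightarrow> mgraph" where
  "merge H u v = \<lparr> g_verts = g_verts H - {v}, g_edges = {f \<in> g_edges H. g_ends H f \<noteq> {u, v}},
      g_ends = (\<lambda>f. rho u v ` g_ends H f) \<rparr>"

definition addE :: "mgraph \<Rightarrow> nat \<Rightarrow> nat \<Rightarrow> nat \<Rightarrow> mgraph" where
  "addE H L p q = H\<lparr>g_edges := insert L (g_edges H), g_ends := (g_ends H)(L := {p, q})\<rparr>"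

definition fresh :: "mgraph \<Rightarrow> nat" where
  "fresh H = Suc (Max (insert 0 (g_edges H)))"

lemma fresh_notin: "finite (g_edges H) \<Longrightarrow> fresh H \<notin> g_edges H"
  unfolding fresh_def using Max_ge[of "insert 0 (g_edges H)"] by fastforce

lemma merge_simps [simp]:
  "g_verts (merge H u v) = g_verts H - {v}"
  "g_edges (merge H u v) = {f \<in> g_edges H. g_ends H f \<noteq> {u, v}}"
  "g_ends (merge H u v) f = rho u v ` g_ends H f"
  unfolding merge_def by simp_all

lemma addE_simps [simp]:
  "g_verts (addE H L p q) = g_verts H"
  "g_edges (addE H L p q) = insert L (g_edges H)"
  "g_ends (addE H L p q) f = (if f = L then {p, q} else g_ends H f)"
  unfolding addE_def by simp_all

lemma rho_image2: "rho u v ` {a, b} = {rho u v a, rho u v b}" by simp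

lemma wf_merge:
  assumes "wf_graph H" "u \<in> g_verts H" "u \<noteq> v"
  shows "wf_graph (merge H u v)"
proof -
  have "\<forall>f\<in>g_edges (merge H u v). g_ends (merge H u v) f \<subseteq> g_verts (merge H u v) \<and> card (g_ends (merge H u v) f) = 2"
  proof
    fix f assume f: "f \<in> g_edges (merge H u v)"
    then have fE: "f \<in> g_edges H" and ne: "g_ends H f \<noteq> {u, v}" by auto
    then have s: "g_ends H f \<subseteq> g_verts H" "card (g_ends H f) = 2" using assms(1) unfolding wf_graph_def by auto
    then obtain a b where ab: "g_ends H f = {a, b}" "a \<noteq> b" by (auto simp: card_Suc_eq numeral_2_eq_2)
    have "rho u v a \<noteq> rho u v b" using ab ne assms(3) unfolding rho_def by (auto simp: insert_commute)
    then have "card (g_ends (merge H u v) f) = 2" using ab by simp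
    moreover have "g_ends (merge H u v) f \<subseteq> g_verts (merge H u v)"
      using s ab assms(2,3) by (auto simp: rho_def)
    ultimately show "g_ends (merge H u v) f \<subseteq> g_verts (merge H u v) \<and> card (g_ends (merge H u v) f) = 2" by simp
  qed
  moreover have "g_verts (merge H u v) \<noteq> {}" using assms(2,3) by auto
  ultimately show ?thesis using assms(1) unfolding wf_graph_def by auto
qed

lemma wf_addE:
  assumes "wf_graph H" "L \<notin> g_edges H" "p \<in> g_verts H" "q \<in> g_verts H" "p \<noteq> q"
  shows "wf_graph (addE H L p q)"
  using assms unfolding wf_graph_def by auto

definition lip :: "mgraph \<Rightarrow> (nat \<Rightarrow> nat) \<Rightarrow> bool" where
  "lip H f \<longleftrightarrow> (\<forall>g a b. g \<in> g_edges H \<longrightarrow> g_ends H g = {a, b} \<longrightarrow> f a \<le> f b + 1)"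

lemma lipD: "lip H f \<Longrightarrow> g \<in> g_edges H \<Longrightarrow> g_ends H g = {a, b} \<Longrightarrow> f a \<le> f b + 1"
  unfolding lip_def by blast

lemma lip_D1: "wf_graph H \<Longrightarrow> lip H (\<lambda>z. D H z c)"
  unfolding lip_def using D_lip1 by blast
lemma lip_D2: "wf_graph H \<Longrightarrow> lip H (\<lambda>z. D H c z)"
  unfolding lip_def using D_lip2 by blast
lemma lip_const: "lip H (\<lambda>z. c)"
  unfolding lip_def by simp
lemma lip_plus: "lip H f \<Longrightarrow> lip H (\<lambda>z. c + f z)"
  unfolding lip_def by force
lemma lip_min: "lip H f \<Longrightarrow> lip H g \<Longrightarrow> lip H (\<lambda>z. min (f z) (g z))"
  unfolding lip_def by (metis (no_types, lifting) add_le_mono1 min.coboundedI1 min.coboundedI2 min_def)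
lemma lip_if: "lip H f \<Longrightarrow> lip H g \<Longrightarrow> lip H (\<lambda>z. if P then f z else g z)"
  by (cases P) auto

lemma lip_merge:
  assumes "wf_graph H" "lip H f" "f u = f v"
  shows "lip (merge H u v) f"
  unfolding lip_def
proof (intro allI impI)
  fix g a b assume g: "g \<in> g_edges (merge H u v)" "g_ends (merge H u v) g = {a, b}"
  then have gE: "g \<in> g_edges H" by simp
  have fr: "\<And>z. f (rho u v z) = f z" using assms(3) unfolding rho_def by simp
  have "card (g_ends H g) = 2" using assms(1) gE unfolding wf_graph_def by auto
  then obtain a0 b0 where ab: "g_ends H g = {a0, b0}" by (auto simp: card_Suc_eq numeral_2_eq_2)
  then have "{a, b} = {rho u v a0, rho u v b0}" using g by simp
  then have "(a = rho u v a0 \<and> b = rho u v b0) \<or> (a = rho u v b0 \<and> b = rho u v a0)"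
    by (simp add: doubleton_eq_iff)
  moreover have "g_ends H g = {b0, a0}" using ab by (simp add: insert_commute)
  ultimately show "f a \<le> f b + 1" using lipD[OF assms(2) gE] ab fr by metis
qed

lemma lip_addE:
  assumes "lip H f" "f p \<le> f q + 1" "f q \<le> f p + 1"
  shows "lip (addE H L p q) f"
  unfolding lip_def
proof (intro allI impI)
  fix g a b assume g: "g \<in> g_edges (addE H L p q)" "g_ends (addE H L p q) g = {a, b}"
  show "f a \<le> f b + 1"
  proof (cases "g = L")
    case True
    then have "{a, b} = {p, q}" using g by simp
    then show ?thesis using assms(2,3) by (auto simp: doubleton_eq_iff)
  next
    case False
    then show ?thesis using g lipD[OF assms(1)] by auto
  qed
qed

locale mctx = pctx +
  fixes u v e :: nat
  assumes eE: "e \<in> g_edges H" and eends: "g_ends H e = {u, v}" and m2: "2 \<le> length es"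
begin

lemma uv: "u \<noteq> v" "u \<in> g_verts H" "v \<in> g_verts H"
  using wfH eE eends unfolding wf_graph_def by (auto dest!: bspec[of _ _ e])

definition "R z = min (D H z u) (D H z v)"

lemma R_u: "R u = 0" and R_v: "R v = 0"
  unfolding R_def using D_refl uv by auto

lemma lip_X: "lip H X" unfolding X_def using lip_D2[OF wfH] .
lemma lip_Y: "lip H Y" unfolding Y_def using lip_D1[OF wfH] .
lemma lip_R: "lip H R" unfolding R_def using lip_min lip_D1[OF wfH] by blast
lemma lip_Dc: "lip H (\<lambda>z. D H c z)" using lip_D2[OF wfH] .

lemma triX: "X a \<le> X z + D H z a"
  unfolding X_def using D_tri by blast
lemma triY: "Y a \<le> D H z a + Y z"
  unfolding Y_def using D_tri D_sym by metis
lemma triXR: "min (X u) (X v) \<le> X z + R z"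
  unfolding R_def using triX[of u z] triX[of v z] by linarith
lemma triYR: "min (Y u) (Y v) \<le> R z + Y z"
  unfolding R_def using triY[of u z] triY[of v z] by linarith

lemma vs_in: "i \<le> m \<Longrightarrow> vs ! i \<in> g_verts H"
  using setP lenP by (simp add: subsetD)

lemma vs_inj: "i \<le> m \<Longrightarrow> j \<le> m \<Longrightarrow> vs ! i = vs ! j \<longleftrightarrow> i = j"
  using distP lenP by (simp add: nth_eq_iff_index_eq)


lemma min3a: "a \<le> b \<Longrightarrow> a \<le> c \<Longrightarrow> min a (min b c) = (a::nat)" by simp
lemma min3b: "b \<le> a \<Longrightarrow> b \<le> c \<Longrightarrow> min a (min b c) = (b::nat)" by simp

lemma bypass:
  assumes s: "s \<le> m"
    and uP: "u \<in> set vs \<Longrightarrow> u = vs ! s" and vP: "v \<in> set vs \<Longrightarrow> v = vs ! s"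
    and Xu: "s \<le> X u" and Xv: "s \<le> X v" and Yu: "m - s \<le> Y u" and Yv: "m - s \<le> Y v"
  shows "\<exists>H'. wf_graph H' \<and> g_verts H' = g_verts H - {v} \<and>
     (\<forall>f\<in>g_edges H. g_ends H f \<noteq> {u, v} \<longrightarrow> f \<in> g_edges H' \<and> g_ends H' f = rho u v ` g_ends H f) \<and>
     m \<le> usp H'"
proof -
  define H1 where "H1 = merge H u v"
  define L where "L = fresh H1"
  define p where "p = vs ! (s - 1)"
  define q where "q = vs ! Suc s"
  define add where "add = (0 < s \<and> s < m)"
  define H' where "H' = (if add then addE H1 L p q else H1)"
  define idx where "idx j = (if j < s then j else Suc j)" for j
  define ws where "ws = map (\<lambda>j. vs ! idx j) [0..<m]"
  define fs where "fs = map (\<lambda>j. if Suc j < s then es ! j else if Suc j = s then L else es ! Suc j) [0..<m - 1]"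
  define big where "big = 2 * m + 2"
  define px where "px z = min (X z) (min (if s < m then s + D H (vs ! Suc s) z else big) (s + R z))" for z
  define py where "py z = min (Y z) (min (if 0 < s then (m - s) + D H (vs ! (s - 1)) z else big) ((m - s) + R z))" for z
  have wf1: "wf_graph H1" unfolding H1_def using wf_merge[OF wfH] uv by blast
  have fin1: "finite (g_edges H1)" using wf1 unfolding wf_graph_def by auto
  have Lnot: "L \<notin> g_edges H1" unfolding L_def using fresh_notin[OF fin1] .
  have nuv: "vs ! i \<noteq> u \<and> vs ! i \<noteq> v" if "i \<le> m" "i \<noteq> s" for i
  proof -
    have "vs ! i \<in> set vs" using that lenP by simp
    then show ?thesis using uP vP that vs_inj[of i s] s by auto
  qed
  have rho_vs: "rho u v (vs ! i) = vs ! i" if "i \<le> m" "i \<noteq> s" for i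
    using nuv[OF that] unfolding rho_def by simp
  have pq: "p \<in> g_verts H1 \<and> q \<in> g_verts H1 \<and> p \<noteq> q" if add
  proof -
    have a: "0 < s" "s < m" using that unfolding add_def by auto
    have "vs ! (s - 1) \<noteq> v" "vs ! Suc s \<noteq> v" using nuv[of "s - 1"] nuv[of "Suc s"] a by auto
    moreover have "vs ! (s - 1) \<in> g_verts H" "vs ! Suc s \<in> g_verts H" using vs_in a by auto
    moreover have "vs ! (s - 1) \<noteq> vs ! Suc s" using vs_inj[of "s - 1" "Suc s"] a by auto
    ultimately show ?thesis unfolding p_def q_def H1_def by simp
  qed
  have wf': "wf_graph H'"
    unfolding H'_def using wf1 wf_addE[OF wf1 Lnot] pq by auto
  have V': "g_verts H' = g_verts H - {v}" unfolding H'_def H1_def by simp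
  have E1: "f \<in> g_edges H' \<and> g_ends H' f = g_ends H1 f" if "f \<in> g_edges H1" for f
    using that Lnot unfolding H'_def by auto
  have E'cases: "f \<in> g_edges H1 \<or> (add \<and> f = L)" if "f \<in> g_edges H'" for f
    using that unfolding H'_def by (auto split: if_splits)
  have endsL: "add \<Longrightarrow> L \<in> g_edges H' \<and> g_ends H' L = {p, q}" unfolding H'_def by simp
  have keep: "\<forall>f\<in>g_edges H. g_ends H f \<noteq> {u, v} \<longrightarrow> f \<in> g_edges H' \<and> g_ends H' f = rho u v ` g_ends H f"
    using E1 unfolding H1_def by simp
  have m1: "1 \<le> m" using m2 by simp
  have esne: "es \<noteq> []" using m2 by auto
  have lws: "length ws = m" and lfs: "length fs = m - 1" unfolding ws_def fs_def by simp_all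
  have ws_nth: "j < m \<Longrightarrow> ws ! j = vs ! idx j" for j unfolding ws_def by simp
  have fs_nth: "j < m - 1 \<Longrightarrow> fs ! j = (if Suc j < s then es ! j else if Suc j = s then L else es ! Suc j)" for j
    unfolding fs_def by simp
  have idx_le: "j < m \<Longrightarrow> idx j \<le> m" for j unfolding idx_def using s by auto
  have idx_ne: "idx j \<noteq> s" for j unfolding idx_def by auto
  have es_edge: "es ! i \<in> g_edges H' \<and> g_ends H' (es ! i) = {vs ! i, vs ! Suc i}" if "i < m" "i \<noteq> s" "Suc i \<noteq> s" for i
  proof -
    have e: "es ! i \<in> g_edges H" "g_ends H (es ! i) = {vs ! i, vs ! Suc i}" using edgeP[OF that(1)] by auto
    have "g_ends H (es ! i) \<noteq> {u, v}" using e(2) nuv[of i] nuv[of "Suc i"] that by (auto simp: doubleton_eq_iff)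
    then have "es ! i \<in> g_edges H1" unfolding H1_def using e by simp
    moreover have "g_ends H1 (es ! i) = {vs ! i, vs ! Suc i}"
      unfolding H1_def using e rho_vs[of i] rho_vs[of "Suc i"] that by simp
    ultimately show ?thesis using E1 by auto
  qed
  have fs_edge: "fs ! j \<in> g_edges H' \<and> g_ends H' (fs ! j) = {ws ! j, ws ! Suc j}" if "j < m - 1" for j
  proof -
    consider "Suc j < s" | "Suc j = s" | "s \<le> j" by linarith
    then show ?thesis
    proof cases
      case 1
      then show ?thesis using es_edge[of j] that fs_nth ws_nth unfolding idx_def by auto
    next
      case 2
      then have "add" unfolding add_def using that by auto
      then show ?thesis using endsL that fs_nth ws_nth 2 unfolding idx_def p_def q_def by auto
    next
      case 3
      then show ?thesis using es_edge[of "Suc j"] that fs_nth ws_nth unfolding idx_def by auto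
    qed
  qed
  have W: "wk H' ws fs"
    unfolding wk_iff
  proof (intro conjI allI impI)
    show "ws \<noteq> []" using lws m1 by auto
    show "set ws \<subseteq> g_verts H'"
    proof
      fix z assume "z \<in> set ws"
      then obtain j where j: "j < m" "z = ws ! j" using lws by (auto simp: in_set_conv_nth)
      then show "z \<in> g_verts H'" using ws_nth vs_in idx_le nuv[of "idx j"] idx_ne V' by auto
    qed
    show "length fs + 1 = length ws" using lws lfs m1 by simp
    fix i assume "i < length fs"
    then show "fs ! i \<in> g_edges H'" "g_ends H' (fs ! i) = {ws ! i, ws ! Suc i}" using fs_edge lfs by auto
  qed
  have dist: "distinct ws"
  proof -
    have "ws ! i \<noteq> ws ! j" if "i < m" "j < m" "i \<noteq> j" for i j
      using that ws_nth vs_inj[of "idx i" "idx j"] idx_le unfolding idx_def by auto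
    then show ?thesis using lws by (auto simp: distinct_conv_nth)
  qed
  have sm: "s \<le> big" "m \<le> big" unfolding big_def using s by auto
  have lipx: "lip H px"
  proof -
    have "lip H (\<lambda>z. min (X z) (min (if s < m then s + D H (vs ! Suc s) z else big) (s + R z)))"
      by (intro lip_min lip_X lip_if lip_plus lip_Dc lip_const lip_R)
    then show ?thesis unfolding px_def .
  qed
  have lipy: "lip H py"
  proof -
    have "lip H (\<lambda>z. min (Y z) (min (if 0 < s then (m - s) + D H (vs ! (s - 1)) z else big) ((m - s) + R z)))"
      by (intro lip_min lip_Y lip_if lip_plus lip_Dc lip_const lip_R)
    then show ?thesis unfolding py_def .
  qed
  have pxu: "px u = s" unfolding px_def using Xu R_u sm by (simp add: min_def)
  have pxv: "px v = s" unfolding px_def using Xv R_v sm by (simp add: min_def)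
  have pyu: "py u = m - s" unfolding py_def using Yu R_u sm by (simp add: min_def)
  have pyv: "py v = m - s" unfolding py_def using Yv R_v sm by (simp add: min_def)
  have addvals: "px p = s - 1 \<and> px q = s \<and> py p = m - s \<and> py q = m - s - 1" if add
  proof -
    have a: "0 < s" "s < m" using that unfolding add_def by auto
    have X1: "X p = s - 1" "X q = Suc s" unfolding p_def q_def using X_eq a by auto
    have Y1: "Y p = m - s + 1" "Y q = m - s - 1" unfolding p_def q_def using Y_eq a by auto
    have D0: "D H q q = 0" "D H p p = 0" unfolding p_def q_def using D_refl vs_in a by auto
    have "px p = min (s - 1) (min (s + D H q p) (s + R p))" unfolding px_def using X1 a q_def by simp
    then have 1: "px p = s - 1" by (subst (asm) min3a) linarith+
    have "px q = min (Suc s) (min s (s + R q))" unfolding px_def using X1 a D0 q_def by simp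
    then have 2: "px q = s" by (subst (asm) min3b) linarith+
    have "py p = min (m - s + 1) (min (m - s) ((m - s) + R p))" unfolding py_def using Y1 a D0 p_def by simp
    then have 3: "py p = m - s" by (subst (asm) min3b) linarith+
    have "py q = min (m - s - 1) (min ((m - s) + D H p q) ((m - s) + R q))" unfolding py_def using Y1 a p_def by simp
    then have 4: "py q = m - s - 1" by (subst (asm) min3a) linarith+
    show ?thesis using 1 2 3 4 by simp
  qed
  have lipx': "lip H' px"
  proof (cases add)
    case True
    then show ?thesis unfolding H'_def H1_def
      using lip_addE[OF lip_merge[OF wfH lipx] ] pxu pxv addvals[OF True] by simp
  next
    case False
    then show ?thesis unfolding H'_def H1_def using lip_merge[OF wfH lipx] pxu pxv by simp
  qed
  have lipy': "lip H' py"
  proof (cases add)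
    case True
    then show ?thesis unfolding H'_def H1_def
      using lip_addE[OF lip_merge[OF wfH lipy] ] pyu pyv addvals[OF True] by simp
  next
    case False
    then show ?thesis unfolding H'_def H1_def using lip_merge[OF wfH lipy] pyu pyv by simp
  qed
  have x0: "px (ws ! 0) = 0"
  proof (cases "s = 0")
    case True
    then have "ws ! 0 = vs ! 1" using ws_nth[of 0] m1 esne unfolding idx_def by simp
    moreover have "D H (vs ! 1) (vs ! 1) = 0" using D_refl vs_in m2 by simp
    ultimately show ?thesis unfolding px_def using True m2 esne by (simp add: min_def)
  next
    case False
    then have "ws ! 0 = vs ! 0" using ws_nth[of 0] m1 esne unfolding idx_def by simp
    moreover have "X (vs ! 0) = 0" using X_eq[of 0] by simp
    ultimately show ?thesis unfolding px_def by simp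
  qed
  have y0: "py (ws ! (m - 1)) = 0"
  proof (cases "m - 1 < s")
    case True
    then have "s = m" "ws ! (m - 1) = vs ! (m - 1)" using ws_nth[of "m - 1"] m1 s unfolding idx_def by auto
    moreover have "D H (vs ! (m - 1)) (vs ! (m - 1)) = 0" using D_refl vs_in by simp
    ultimately show ?thesis unfolding py_def using m2 esne by (simp add: min_def)
  next
    case False
    moreover have "Suc (m - 1) = m" using m1 by simp
    ultimately have "ws ! (m - 1) = vs ! m" using ws_nth[of "m - 1"] m1 unfolding idx_def by simp
    moreover have "Y (vs ! m) = 0" using Y_eq[of m] by simp
    ultimately show ?thesis unfolding py_def by simp
  qed
  have S: "z = ws ! j" if z: "z \<in> g_verts H'" and hx: "px z \<le> j" and hy: "py z + j \<le> m - 1" for z j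
  proof -
    have jm: "j < m" using hy m1 by linarith
    have xs: "X z \<le> j \<or> (s < m \<and> s + D H (vs ! Suc s) z \<le> j) \<or> s + R z \<le> j"
      using hx jm sm unfolding px_def by (auto simp: min_le_iff_disj split: if_splits)
    have ys: "Y z + j \<le> m - 1 \<or> (0 < s \<and> (m - s) + D H (vs ! (s - 1)) z + j \<le> m - 1) \<or> (m - s) + R z + j \<le> m - 1"
    proof -
      have "py z \<le> m - 1 - j" using hy by linarith
      then have "Y z \<le> m - 1 - j \<or> (0 < s \<and> (m - s) + D H (vs ! (s - 1)) z \<le> m - 1 - j) \<or> (m - s) + R z \<le> m - 1 - j"
        using jm sm unfolding py_def by (auto simp: min_le_iff_disj split: if_splits)
      then show ?thesis using jm by linarith
    qed
    have mXY: "m \<le> X z + Y z" using XY_ge .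
    have tXR: "s \<le> X z + R z" using triXR[of z] Xu Xv by linarith
    have tYR: "m - s \<le> R z + Y z" using triYR[of z] Yu Yv by linarith
    consider (a) "X z \<le> j" | (b) "s < m" "s + D H (vs ! Suc s) z \<le> j" | (c) "s + R z \<le> j" using xs by blast
    then show ?thesis
    proof cases
      case a
      consider (a1) "Y z + j \<le> m - 1" | (a2) "0 < s" "(m - s) + D H (vs ! (s - 1)) z + j \<le> m - 1"
        | (a3) "(m - s) + R z + j \<le> m - 1" using ys by blast
      then show ?thesis
      proof cases
        case a1
        have False using a1 a mXY m1 by linarith
        then show ?thesis ..
      next
        case a2
        have "Y z \<le> D H (vs ! (s - 1)) z + Y (vs ! (s - 1))" using triY .
        moreover have "Y (vs ! (s - 1)) = m - (s - 1)" using Y_eq s a2 by simp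
        ultimately have "Y z + j \<le> m" "j < s" using a2 s by linarith+
        then have "z = vs ! j" using F6 a by blast
        then show ?thesis using ws_nth jm \<open>j < s\<close> unfolding idx_def by simp
      next
        case a3
        have False using a3 a tXR s m1 by linarith
        then show ?thesis ..
      qed
    next
      case b
      consider (b1) "Y z + j \<le> m - 1" | (b2) "0 < s" "(m - s) + D H (vs ! (s - 1)) z + j \<le> m - 1"
        | (b3) "(m - s) + R z + j \<le> m - 1" using ys by blast
      then show ?thesis
      proof cases
        case b1
        have "X z \<le> X (vs ! Suc s) + D H (vs ! Suc s) z" using triX .
        moreover have "X (vs ! Suc s) = Suc s" using X_eq b by simp
        ultimately have "X z \<le> Suc j" "Y z + Suc j \<le> m" "s \<le> j" using b b1 m1 by linarith+
        then have "z = vs ! Suc j" using F6 by blast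
        then show ?thesis using ws_nth jm \<open>s \<le> j\<close> unfolding idx_def by simp
      next
        case b2
        have False using b b2 s m1 by linarith
        then show ?thesis ..
      next
        case b3
        have False using b b3 s m1 by linarith
        then show ?thesis ..
      qed
    next
      case c
      consider (c1) "Y z + j \<le> m - 1" | (c2) "0 < s" "(m - s) + D H (vs ! (s - 1)) z + j \<le> m - 1"
        | (c3) "(m - s) + R z + j \<le> m - 1" using ys by blast
      then show ?thesis
      proof cases
        case c1
        have False using c1 c tYR s m1 by linarith
        then show ?thesis ..
      next
        case c2
        have False using c c2 s m1 by linarith
        then show ?thesis ..
      next
        case c3
        have False using c c3 s m1 by linarith
        then show ?thesis ..
      qed
    qed
  qed
  have fsE1: "Suc j \<noteq> s \<Longrightarrow> j < m - 1 \<Longrightarrow> fs ! j \<in> g_edges H1" for j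
  proof -
    assume a: "Suc j \<noteq> s" "j < m - 1"
    define i where "i = idx j"
    have i: "i < m" "i \<noteq> s" "Suc i \<noteq> s" "fs ! j = es ! i" using a fs_nth unfolding i_def idx_def by auto
    have e: "es ! i \<in> g_edges H" "g_ends H (es ! i) = {vs ! i, vs ! Suc i}" using edgeP[OF i(1)] by auto
    have "g_ends H (es ! i) \<noteq> {u, v}" using e(2) nuv[of i] nuv[of "Suc i"] i by (auto simp: doubleton_eq_iff)
    then show ?thesis using e i unfolding H1_def by simp
  qed
  have E: "g = fs ! j" if j: "j < m - 1" and g: "g \<in> g_edges H'" "g_ends H' g = g_ends H' (fs ! j)" for j g
  proof -
    have fe: "g_ends H' (fs ! j) = {vs ! idx j, vs ! idx (Suc j)}" using fs_edge[OF j] ws_nth j by simp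
    have il: "idx j \<le> m" "idx (Suc j) \<le> m" using idx_le j by auto
    consider (L) "add" "g = L" | (old) "g \<in> g_edges H1" using E'cases[OF g(1)] by blast
    then show ?thesis
    proof cases
      case L
      show ?thesis
      proof (cases "Suc j = s")
        case True
        then show ?thesis using L fs_nth j by simp
      next
        case False
        have "{vs ! (s - 1), vs ! Suc s} = {vs ! idx j, vs ! idx (Suc j)}"
          using g(2) fe endsL[OF L(1)] L unfolding p_def q_def by simp
        moreover have "s - 1 \<le> m" "Suc s \<le> m" using L(1) unfolding add_def by auto
        ultimately have "(s - 1 = idx j \<and> Suc s = idx (Suc j)) \<or> (s - 1 = idx (Suc j) \<and> Suc s = idx j)"
          using vs_inj il by (auto simp: doubleton_eq_iff)
        then show ?thesis using False L(1) unfolding idx_def add_def by (auto split: if_splits)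
      qed
    next
      case old
      then have gE: "g \<in> g_edges H" and ge1: "g_ends H' g = rho u v ` g_ends H g" using E1 unfolding H1_def by auto
      have "card (g_ends H g) = 2" using wfH gE unfolding wf_graph_def by auto
      then obtain a0 b0 where ab: "g_ends H g = {a0, b0}" by (auto simp: card_Suc_eq numeral_2_eq_2)
      have eqs: "{rho u v a0, rho u v b0} = {vs ! idx j, vs ! idx (Suc j)}" using ge1 ab g(2) fe by simp
      have n1: "vs ! idx j \<noteq> u" "vs ! idx (Suc j) \<noteq> u" using nuv il idx_ne by auto
      have "rho u v a0 \<noteq> u" "rho u v b0 \<noteq> u" using eqs n1 by (auto simp: doubleton_eq_iff)
      then have "rho u v a0 = a0" "rho u v b0 = b0" unfolding rho_def by (auto split: if_splits)
      then have "g_ends H g = {vs ! idx j, vs ! idx (Suc j)}" using ab eqs by simp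
      from F8[OF gE this il]
      have "idx (Suc j) = Suc (idx j) \<and> g = es ! idx j" unfolding idx_def by (auto split: if_splits)
      then show ?thesis using fs_nth j unfolding idx_def by (auto split: if_splits)
    qed
  qed
  have U: "unique_shortest_path H' (ws, fs) (ws ! 0) (ws ! (m - 1))"
    using certificate[OF wf' W dist lfs, of px py] lipx' lipy' x0 y0 S E
    unfolding lip_def by blast
  have "m \<le> usp H'" using usp_ge[OF wf' U] lws by simp
  then show ?thesis using wf' V' keep by blast
qed

lemma caseA:
  assumes s: "s < m"
    and uv_on: "(u = vs ! s \<and> v = vs ! Suc s) \<or> (u = vs ! Suc s \<and> v = vs ! s)"
  shows "\<exists>H'. wf_graph H' \<and> g_verts H' = g_verts H - {v} \<and>
     (\<forall>f\<in>g_edges H. g_ends H f \<noteq> {u, v} \<longrightarrow> f \<in> g_edges H' \<and> g_ends H' f = rho u v ` g_ends H f) \<and>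
     m \<le> usp H'"
proof -
  define a where "a = (if u = vs ! s then s else Suc s)"
  define b where "b = (if u = vs ! s then Suc s else s)"
  have ua: "u = vs ! a" and vb: "v = vs ! b" using uv_on uv(1) unfolding a_def b_def by auto
  have ab: "(a = s \<and> b = Suc s) \<or> (a = Suc s \<and> b = s)" unfolding a_def b_def by auto
  define H' where "H' = merge H u v"
  define idx where "idx j = (if j < b then j else Suc j)" for j
  define kk where "kk j = (if j < s then j else Suc j)" for j
  define fi where "fi i = (if i = b then a else i)" for i
  define ws where "ws = map (\<lambda>j. vs ! idx j) [0..<m]"
  define fs where "fs = map (\<lambda>j. es ! kk j) [0..<m - 1]"
  define px where "px z = min (X z) (s + R z)" for z
  define py where "py z = min (Y z) ((m - s - 1) + R z)" for z
  have m1: "1 \<le> m" using m2 by simp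
  have esne: "es \<noteq> []" using m2 by auto
  have wf': "wf_graph H'" unfolding H'_def using wf_merge[OF wfH] uv by blast
  have V': "g_verts H' = g_verts H - {v}" unfolding H'_def by simp
  have keep: "\<forall>f\<in>g_edges H. g_ends H f \<noteq> {u, v} \<longrightarrow> f \<in> g_edges H' \<and> g_ends H' f = rho u v ` g_ends H f"
    unfolding H'_def by simp
  have Rsym: "R z = min (D H z (vs ! s)) (D H z (vs ! Suc s))" for z
    unfolding R_def using uv_on by (auto simp: min.commute)
  have rho_vs: "rho u v (vs ! i) = vs ! fi i" if "i \<le> m" for i
    using vs_inj[of i b] that ua vb ab s unfolding rho_def fi_def by auto
  have lws: "length ws = m" and lfs: "length fs = m - 1" unfolding ws_def fs_def by simp_all
  have ws_nth: "j < m \<Longrightarrow> ws ! j = vs ! idx j" for j unfolding ws_def by simp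
  have fs_nth: "j < m - 1 \<Longrightarrow> fs ! j = es ! kk j" for j unfolding fs_def by simp
  have idx_le: "j < m \<Longrightarrow> idx j \<le> m" for j unfolding idx_def by auto
  have idx_ne: "idx j \<noteq> b" for j unfolding idx_def by auto
  have kk_lt: "j < m - 1 \<Longrightarrow> kk j < m" for j unfolding kk_def by auto
  have kk_ne: "kk j \<noteq> s" for j unfolding kk_def by auto
  have uvset: "{u, v} = {vs ! s, vs ! Suc s}" using uv_on by auto
  have notuv: "g_ends H (es ! k) \<noteq> {u, v}" if "k < m" "k \<noteq> s" for k
  proof
    assume "g_ends H (es ! k) = {u, v}"
    then have "{vs ! k, vs ! Suc k} = {vs ! s, vs ! Suc s}" using edgeP[OF that(1)] uvset by simp
    then show False using vs_inj that s by (auto simp: doubleton_eq_iff)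
  qed
  have fs_edge: "fs ! j \<in> g_edges H' \<and> g_ends H' (fs ! j) = {ws ! j, ws ! Suc j}" if j: "j < m - 1" for j
  proof -
    have k: "kk j < m" "kk j \<noteq> s" using kk_lt[OF j] kk_ne by auto
    have e: "es ! kk j \<in> g_edges H" "g_ends H (es ! kk j) = {vs ! kk j, vs ! Suc (kk j)}" using edgeP[OF k(1)] by auto
    have in1: "es ! kk j \<in> g_edges H'" unfolding H'_def using e notuv[OF k] by simp
    have "g_ends H' (es ! kk j) = {vs ! fi (kk j), vs ! fi (Suc (kk j))}"
      unfolding H'_def using e rho_vs[of "kk j"] rho_vs[of "Suc (kk j)"] k by simp
    moreover have "fi (kk j) = idx j" "fi (Suc (kk j)) = idx (Suc j)"
      using ab unfolding fi_def kk_def idx_def by auto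
    ultimately show ?thesis using in1 fs_nth[OF j] ws_nth j by simp
  qed
  have W: "wk H' ws fs"
    unfolding wk_iff
  proof (intro conjI allI impI)
    show "ws \<noteq> []" using lws m1 by auto
    show "set ws \<subseteq> g_verts H'"
    proof
      fix z assume "z \<in> set ws"
      then obtain j where j: "j < m" "z = ws ! j" using lws by (auto simp: in_set_conv_nth)
      have "vs ! idx j \<noteq> v" using vb vs_inj[of "idx j" b] idx_le[OF j(1)] idx_ne ab s by auto
      then show "z \<in> g_verts H'" using j ws_nth vs_in idx_le V' by auto
    qed
    show "length fs + 1 = length ws" using lws lfs m1 by simp
    fix i assume "i < length fs"
    then show "fs ! i \<in> g_edges H'" "g_ends H' (fs ! i) = {ws ! i, ws ! Suc i}" using fs_edge lfs by auto
  qed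
  have dist: "distinct ws"
  proof -
    have "ws ! i \<noteq> ws ! j" if "i < m" "j < m" "i \<noteq> j" for i j
      using that ws_nth vs_inj[of "idx i" "idx j"] idx_le unfolding idx_def by auto
    then show ?thesis using lws by (auto simp: distinct_conv_nth)
  qed
  have Xs: "X (vs ! s) = s" "X (vs ! Suc s) = Suc s" using X_eq s by auto
  have Ys: "Y (vs ! s) = m - s" "Y (vs ! Suc s) = m - s - 1" using Y_eq s by auto
  have lipx: "lip H px"
  proof -
    have "lip H (\<lambda>z. min (X z) (s + R z))" by (intro lip_min lip_X lip_plus lip_R)
    then show ?thesis unfolding px_def .
  qed
  have lipy: "lip H py"
  proof -
    have "lip H (\<lambda>z. min (Y z) ((m - s - 1) + R z))" by (intro lip_min lip_Y lip_plus lip_R)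
    then show ?thesis unfolding py_def .
  qed
  have pxuv: "px u = s" "px v = s" unfolding px_def using uv_on Xs R_u R_v by auto
  have pyuv: "py u = m - s - 1" "py v = m - s - 1" unfolding py_def using uv_on Ys R_u R_v by auto
  have lipx': "lip H' px" unfolding H'_def using lip_merge[OF wfH lipx] pxuv by simp
  have lipy': "lip H' py" unfolding H'_def using lip_merge[OF wfH lipy] pyuv by simp
  have x0: "px (ws ! 0) = 0"
  proof (cases "b = 0")
    case True
    then have "s = 0" "a = 1" using ab by auto
    then have "ws ! 0 = u" using ws_nth[of 0] m1 esne True ua unfolding idx_def by simp
    then show ?thesis using pxuv \<open>s = 0\<close> by simp
  next
    case False
    then have "ws ! 0 = vs ! 0" using ws_nth[of 0] m1 esne unfolding idx_def by simp
    moreover have "X (vs ! 0) = 0" using X_eq[of 0] by simp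
    ultimately show ?thesis unfolding px_def by simp
  qed
  have y0: "py (ws ! (m - 1)) = 0"
  proof (cases "m - 1 < b")
    case True
    have "b \<noteq> s" using True s by linarith
    then have "b = Suc s" "a = s" using ab by auto
    then have "b = m" "s = m - 1" "a = m - 1" using True s by linarith+
    then have "ws ! (m - 1) = u" using ws_nth[of "m - 1"] m1 esne True ua unfolding idx_def by simp
    then show ?thesis using pyuv \<open>s = m - 1\<close> by simp
  next
    case False
    moreover have "Suc (m - 1) = m" using m1 by simp
    ultimately have "ws ! (m - 1) = vs ! m" using ws_nth[of "m - 1"] m1 unfolding idx_def by simp
    moreover have "Y (vs ! m) = 0" using Y_eq[of m] by simp
    ultimately show ?thesis unfolding py_def by simp
  qed
  have S: "z = ws ! j" if z: "z \<in> g_verts H'" and hx: "px z \<le> j" and hy: "py z + j \<le> m - 1" for z j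
  proof -
    have jm: "j < m" using hy m1 by linarith
    have zv: "z \<noteq> v" using z V' by auto
    have xs: "X z \<le> j \<or> s + R z \<le> j" using hx unfolding px_def by (auto simp: min_le_iff_disj)
    have ys: "Y z + j \<le> m - 1 \<or> (m - s - 1) + R z + j \<le> m - 1" using hy unfolding py_def
      by (auto simp: min_def split: if_splits)
    have mXY: "m \<le> X z + Y z" using XY_ge .
    have R1: "R z = D H z (vs ! s) \<or> R z = D H z (vs ! Suc s)" using Rsym by (auto simp: min_def)
    have R2: "R z \<le> D H z (vs ! s)" "R z \<le> D H z (vs ! Suc s)" using Rsym by auto
    have t1: "X (vs ! Suc s) \<le> X z + D H z (vs ! Suc s)" using triX .
    have t2: "Y (vs ! s) \<le> D H z (vs ! s) + Y z" using triY D_sym by metis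
    have t3: "Y z \<le> D H z (vs ! s) + Y (vs ! s)" using triY[of z "vs ! s"] D_sym by metis
    have t4: "X z \<le> X (vs ! Suc s) + D H z (vs ! Suc s)" using triX[of z "vs ! Suc s"] D_sym by metis
    consider (a) "X z \<le> j" | (c) "s + R z \<le> j" using xs by blast
    then show ?thesis
    proof cases
      case a
      consider (a1) "Y z + j \<le> m - 1" | (a3) "(m - s - 1) + R z + j \<le> m - 1" using ys by blast
      then show ?thesis
      proof cases
        case a1
        have False using a1 a mXY m1 by linarith
        then show ?thesis ..
      next
        case a3
        have "R z \<noteq> D H z (vs ! Suc s)" using a3 a t1 Xs s by linarith
        then have Rs: "R z = D H z (vs ! s)" using R1 by auto
        then have "Y z + j \<le> m" "j \<le> s" using a3 t3 Ys s by linarith+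
        then have zj: "z = vs ! j" using F6 a by blast
        show ?thesis
        proof (cases "j < s")
          case True
          then show ?thesis using zj ws_nth jm ab unfolding idx_def by auto
        next
          case False
          then have "j = s" using \<open>j \<le> s\<close> by simp
          then have "b \<noteq> s" using zv zj vb by auto
          then have "b = Suc s" using ab by auto
          then show ?thesis using zj ws_nth jm \<open>j = s\<close> unfolding idx_def by auto
        qed
      qed
    next
      case c
      consider (c1) "Y z + j \<le> m - 1" | (c3) "(m - s - 1) + R z + j \<le> m - 1" using ys by blast
      then show ?thesis
      proof cases
        case c1
        have "R z \<noteq> D H z (vs ! s)" using c1 c t2 Ys s by linarith
        then have Rs: "R z = D H z (vs ! Suc s)" using R1 by auto
        then have "X z \<le> Suc j" "Y z + Suc j \<le> m" "s \<le> j" using c c1 t4 Xs s m1 by linarith+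
        then have zj: "z = vs ! Suc j" using F6 by blast
        show ?thesis
        proof (cases "j < b")
          case False
          then show ?thesis using zj ws_nth jm unfolding idx_def by auto
        next
          case True
          then have "b = Suc s" "j = s" using ab \<open>s \<le> j\<close> by auto
          then show ?thesis using zj zv vb by simp
        qed
      next
        case c3
        then have "R z = 0" "j = s" using c s by linarith+
        then have "z = vs ! s \<or> z = vs ! Suc s" using R1 D_zero vne by metis
        then have "z = u" using zv uv_on by auto
        then show ?thesis using ws_nth jm \<open>j = s\<close> ua ab unfolding idx_def by auto
      qed
    qed
  qed
  have E: "g = fs ! j" if j: "j < m - 1" and g: "g \<in> g_edges H'" "g_ends H' g = g_ends H' (fs ! j)" for j g
  proof -
    have fe: "g_ends H' (fs ! j) = {vs ! idx j, vs ! idx (Suc j)}" using fs_edge[OF j] ws_nth j by simp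
    have il: "idx j \<le> m" "idx (Suc j) \<le> m" using idx_le j by auto
    have gE: "g \<in> g_edges H" and gnot: "g_ends H g \<noteq> {u, v}" and ge1: "g_ends H' g = rho u v ` g_ends H g"
      using g unfolding H'_def by auto
    have inP: "w \<in> set vs" if w: "w \<in> g_ends H g" for w
    proof (cases "w = v")
      case True
      then show ?thesis using vb ab s lenP by auto
    next
      case False
      then have "rho u v w = w" unfolding rho_def by simp
      then have "w \<in> {vs ! idx j, vs ! idx (Suc j)}" using w ge1 g(2) fe by (metis imageI)
      then show ?thesis using il lenP by auto
    qed
    have "card (g_ends H g) = 2" using wfH gE unfolding wf_graph_def by auto
    then obtain a0 b0 where a0b0: "g_ends H g = {a0, b0}" by (auto simp: card_Suc_eq numeral_2_eq_2)
    have "a0 \<in> set vs" "b0 \<in> set vs" using inP a0b0 by auto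
    then obtain c0 c1 where c01: "c0 < length vs" "vs ! c0 = a0" "c1 < length vs" "vs ! c1 = b0"
      by (auto simp: in_set_conv_nth)
    then have c0: "c0 \<le> m" "a0 = vs ! c0" and c1: "c1 \<le> m" "b0 = vs ! c1" using lenP by auto
    have "(c1 = Suc c0 \<and> g = es ! c0) \<or> (c0 = Suc c1 \<and> g = es ! c1)"
      using F8[OF gE _ c0(1) c1(1)] a0b0 c0 c1 by simp
    then obtain c where c: "c < m" "g = es ! c" "g_ends H g = {vs ! c, vs ! Suc c}"
    proof
      assume h: "c1 = Suc c0 \<and> g = es ! c0"
      show thesis using that[of c0] h a0b0 c0 c1 by simp
    next
      assume h: "c0 = Suc c1 \<and> g = es ! c1"
      show thesis using that[of c1] h a0b0 c0 c1 by (simp add: insert_commute)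
    qed
    have cs: "c \<noteq> s" using c(3) gnot uvset by auto
    have k: "kk j < m" "kk j \<noteq> s" using kk_lt[OF j] kk_ne by auto
    have "g_ends H' g = {vs ! fi c, vs ! fi (Suc c)}" using ge1 c rho_vs by simp
    moreover have "g_ends H' (fs ! j) = {vs ! fi (kk j), vs ! fi (Suc (kk j))}"
      using fs_nth[OF j] edgeP[OF k(1)] rho_vs k unfolding H'_def by simp
    ultimately have "{vs ! fi c, vs ! fi (Suc c)} = {vs ! fi (kk j), vs ! fi (Suc (kk j))}" using g(2) by simp
    moreover have "fi c \<le> m" "fi (Suc c) \<le> m" "fi (kk j) \<le> m" "fi (Suc (kk j)) \<le> m"
      using c k ab s unfolding fi_def by auto
    ultimately have "(fi c = fi (kk j) \<and> fi (Suc c) = fi (Suc (kk j))) \<or> (fi c = fi (Suc (kk j)) \<and> fi (Suc c) = fi (kk j))"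
      using vs_inj by (auto simp: doubleton_eq_iff)
    then have "c = kk j" using cs k(2) ab unfolding fi_def by (auto split: if_splits)
    then show ?thesis using c(2) fs_nth[OF j] by simp
  qed
  have U: "unique_shortest_path H' (ws, fs) (ws ! 0) (ws ! (m - 1))"
    using certificate[OF wf' W dist lfs, of px py] lipx' lipy' x0 y0 S E
    unfolding lip_def by blast
  have "m \<le> usp H'" using usp_ge[OF wf' U] lws by simp
  then show ?thesis using wf' V' keep by blast
qed
end

context mctx
begin

lemma merge_main:
  "\<exists>H'. wf_graph H' \<and> g_verts H' = g_verts H - {v} \<and>
     (\<forall>f\<in>g_edges H. g_ends H f \<noteq> {u, v} \<longrightarrow> f \<in> g_edges H' \<and> g_ends H' f = rho u v ` g_ends H f) \<and>
     m \<le> usp H'"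
proof -
  have e1: "g_ends H e = {v, u}" using eends by (simp add: insert_commute)
  have lx: "X u \<le> X v + 1" "X v \<le> X u + 1" using lipX[OF eE eends] lipX[OF eE e1] by auto
  have ly: "Y u \<le> Y v + 1" "Y v \<le> Y u + 1" using lipY[OF eE eends] lipY[OF eE e1] by auto
  have idx_of: "\<exists>i. i \<le> m \<and> z = vs ! i" if zin: "z \<in> set vs" for z
  proof -
    obtain i where "i < length vs" "vs ! i = z" using zin in_set_conv_nth[of z vs] by blast
    then show ?thesis using lenP by (intro exI[of _ i]) auto
  qed
  consider (both) "u \<in> set vs" "v \<in> set vs" | (onlyu) "u \<in> set vs" "v \<notin> set vs"
    | (onlyv) "u \<notin> set vs" "v \<in> set vs" | (none) "u \<notin> set vs" "v \<notin> set vs" by blast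
  then show ?thesis
  proof cases
    case both
    obtain iu iv where i: "iu \<le> m" "u = vs ! iu" "iv \<le> m" "v = vs ! iv" using idx_of both by blast
    have "X u = iu" "X v = iv" using X_eq i by auto
    moreover have "iu \<noteq> iv" using i uv(1) by auto
    ultimately have "iv = Suc iu \<or> iu = Suc iv" using lx by linarith
    then show ?thesis
    proof
      assume h: "iv = Suc iu"
      show ?thesis by (rule caseA[of iu]) (use h i in auto)
    next
      assume h: "iu = Suc iv"
      show ?thesis by (rule caseA[of iv]) (use h i in auto)
    qed
  next
    case onlyu
    obtain s where i: "s \<le> m" "u = vs ! s" using idx_of onlyu by blast
    have Xu: "X u = s" and Yu: "Y u = m - s" using X_eq Y_eq i by auto
    have gt: "Suc m \<le> X v + Y v" using XY_gt onlyu by simp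
    show ?thesis
      by (rule bypass[of s]) (use i onlyu Xu Yu gt lx ly in linarith)+
  next
    case onlyv
    obtain s where i: "s \<le> m" "v = vs ! s" using idx_of onlyv by blast
    have Xv: "X v = s" and Yv: "Y v = m - s" using X_eq Y_eq i by auto
    have gt: "Suc m \<le> X u + Y u" using XY_gt onlyv by simp
    show ?thesis
      by (rule bypass[of s]) (use i onlyv Xv Yv gt lx ly in linarith)+
  next
    case none
    have gu: "Suc m \<le> X u + Y u" and gv: "Suc m \<le> X v + Y v" using XY_gt none by auto
    show ?thesis
    proof (cases "X u + Y v \<le> m")
      case True
      show ?thesis by (rule bypass[of "X u"]) (use none True gu gv lx ly in linarith)+
    next
      case F1: False
      show ?thesis
      proof (cases "X v + Y u \<le> m")
        case True
        show ?thesis by (rule bypass[of "X v"]) (use none True gu gv lx ly in linarith)+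
      next
        case False
        show ?thesis
          by (rule bypass[of "min (min (X u) (X v)) m"]) (use none False F1 gu gv lx ly in auto)
      qed
    qed
  qed
qed

end

lemma usp_parade:
  assumes "wf_graph H"
  obtains vs es where "unique_shortest_path H (vs, es) (hd vs) (last vs)" "length vs = usp H"
proof -
  obtain P a b where P: "unique_shortest_path H P a b" "length (fst P) = usp H" using usp_obtain[OF assms] by blast
  obtain vs es where Pd: "P = (vs, es)" by (cases P)
  have "hd vs = a" "last vs = b" using P(1) Pd unfolding unique_shortest_path_def shortest_path_def is_path_def Let_def by auto
  then show ?thesis using that P Pd by auto
qed

lemma merge_step:
  assumes wf: "wf_graph H" and eE: "e \<in> g_edges H" and eends: "g_ends H e = {u, v}"
  shows "\<exists>H'. wf_graph H' \<and> g_verts H' = g_verts H - {v} \<and>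
     (\<forall>f\<in>g_edges H. g_ends H f \<noteq> {u, v} \<longrightarrow> f \<in> g_edges H' \<and> g_ends H' f = rho u v ` g_ends H f) \<and>
     usp H \<le> usp H' + 1"
proof -
  obtain vs es where P: "unique_shortest_path H (vs, es) (hd vs) (last vs)" "length vs = usp H"
    using usp_parade[OF wf] by blast
  have uvH: "u \<noteq> v" "u \<in> g_verts H" using wf eE eends unfolding wf_graph_def by (auto dest!: bspec[of _ _ e])
  have wk: "wk H vs es" using P(1) unfolding unique_shortest_path_def shortest_path_def is_path_walk walk_def by auto
  have lv: "length vs = Suc (length es)" using wk_length[OF wk] .
  show ?thesis
  proof (cases "2 \<le> length es")
    case True
    interpret mctx H vs es u v e using wf P(1) eE eends True by unfold_locales auto
    from merge_main obtain H' where "wf_graph H'" "g_verts H' = g_verts H - {v}"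
      "\<forall>f\<in>g_edges H. g_ends H f \<noteq> {u, v} \<longrightarrow> f \<in> g_edges H' \<and> g_ends H' f = rho u v ` g_ends H f"
      "length es \<le> usp H'" by blast
    then show ?thesis using P(2) lv by (intro exI[of _ H']) auto
  next
    case False
    have w1: "wf_graph (merge H u v)" using wf_merge[OF wf uvH(2,1)] .
    have "usp H \<le> 2" using P(2) lv False by simp
    then have "usp H \<le> usp (merge H u v) + 1" using usp_pos[OF w1] by simp
    then show ?thesis using w1 by (intro exI[of _ "merge H u v"]) auto
  qed
qed

lemma is_path_mono:
  assumes "g_verts A \<subseteq> g_verts B" "g_edges A = g_edges B" "g_ends A = g_ends B" "is_path A Q a b"
  shows "is_path B Q a b"
  using assms unfolding is_path_def Let_def by auto

lemma delete_vertex_simps [simp]: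
  "g_verts (delete_vertex H v) = g_verts H - {v}"
  "g_edges (delete_vertex H v) = g_edges H"
  "g_ends (delete_vertex H v) = g_ends H"
  unfolding delete_vertex_def by simp_all

lemma delete_edge_simps [simp]:
  "g_verts (delete_edge H e) = g_verts H"
  "g_edges (delete_edge H e) = g_edges H - {e}"
  "g_ends (delete_edge H e) = g_ends H"
  unfolding delete_edge_def by simp_all

lemma isolated_step:
  assumes wf: "wf_graph H" and v: "v \<in> g_verts H" "g_verts H - {v} \<noteq> {}"
    and iso: "\<forall>e\<in>g_edges H. v \<notin> g_ends H e"
  shows "wf_graph (delete_vertex H v) \<and> usp H \<le> usp (delete_vertex H v) + 1"
proof -
  let ?H = "delete_vertex H v"
  have wf1: "wf_graph ?H" using wf v iso unfolding wf_graph_def by auto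
  obtain vs es where P: "unique_shortest_path H (vs, es) (hd vs) (last vs)" "length vs = usp H"
    using usp_parade[OF wf] by blast
  have pth: "is_path H (vs, es) (hd vs) (last vs)" using P(1) unfolding unique_shortest_path_def shortest_path_def by auto
  have wk: "wk H vs es" using pth unfolding is_path_walk walk_def by auto
  show ?thesis
  proof (cases "v \<in> set vs")
    case True
    have "es = []"
    proof (rule ccontr)
      assume "es \<noteq> []"
      obtain i where i: "i < length vs" "vs ! i = v" using True in_set_conv_nth[of v vs] by blast
      have lv: "length vs = Suc (length es)" using wk_length[OF wk] .
      show False
      proof (cases "i < length es")
        case True
        then show False using wk i iso by (auto simp: wk_iff)
      next
        case False
        have "0 < length es" using \<open>es \<noteq> []\<close> by simp
        then have "i - 1 < length es" "Suc (i - 1) = i" using i lv False by arith+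
        then show False using wk i iso wk_iff[of H vs es] by (metis insertCI)
      qed
    qed
    then have "usp H = 1" using P(2) wk_length[OF wk] by simp
    then show ?thesis using wf1 by simp
  next
    case False
    have mono: "is_path H Q a b" if "is_path ?H Q a b" for Q a b
      using is_path_mono[OF _ _ _ that] by auto
    have pth1: "is_path ?H (vs, es) (hd vs) (last vs)" using pth False unfolding is_path_def Let_def by auto
    have "unique_shortest_path ?H (vs, es) (hd vs) (last vs)"
      using P(1) pth1 mono unfolding unique_shortest_path_def shortest_path_def by blast
    then have "usp H \<le> usp ?H" using usp_ge[OF wf1] P(2) by fastforce
    then show ?thesis using wf1 by simp
  qed
qed

lemma card2_obtain:
  assumes "card S = 2"
  obtains a b where "S = {a, b}" "a \<noteq> b"
  using assms by (auto simp: card_Suc_eq numeral_2_eq_2)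

lemma chain:
  assumes "minor_step\<^sup>*\<^sup>* H K" "wf_graph H"
  shows "\<exists>K'. wf_graph K' \<and> g_verts K' = g_verts K \<and> subgraph K K' \<and>
           usp H + card (g_verts K) \<le> usp K' + card (g_verts H)"
  using assms(1)
proof (induction rule: rtranclp_induct)
  case base
  then show ?case using assms(2) unfolding subgraph_def by auto
next
  case (step K K1)
  from step.IH obtain K' where K': "wf_graph K'" "g_verts K' = g_verts K" "subgraph K K'"
    "usp H + card (g_verts K) \<le> usp K' + card (g_verts H)" by blast
  have finK: "finite (g_verts K)" using K' unfolding wf_graph_def by auto
  have sub: "g_edges K \<subseteq> g_edges K'" "\<And>f. f \<in> g_edges K \<Longrightarrow> g_ends K' f = g_ends K f"
    using K'(3) unfolding subgraph_def by auto
  from step.hyps(2) show ?case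
  proof cases
    case (del_vertex v)
    have "0 < card (g_verts K)" using finK del_vertex by (auto simp: card_gt_0_iff)
    then have cardK1: "card (g_verts K) = Suc (card (g_verts K1))"
      using del_vertex finK by simp
    show ?thesis
    proof (cases "\<exists>e\<in>g_edges K'. v \<in> g_ends K' e")
      case True
      then obtain e where e: "e \<in> g_edges K'" "v \<in> g_ends K' e" by blast
      have "card (g_ends K' e) = 2" using K'(1) e unfolding wf_graph_def by auto
      then obtain w where ew: "g_ends K' e = {w, v}"
        using e(2) by (metis card2_obtain insertE insert_commute singletonD)
      obtain K1' where K1': "wf_graph K1'" "g_verts K1' = g_verts K' - {v}"
        "\<forall>f\<in>g_edges K'. g_ends K' f \<noteq> {w, v} \<longrightarrow> f \<in> g_edges K1' \<and> g_ends K1' f = rho w v ` g_ends K' f"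
        "usp K' \<le> usp K1' + 1"
        using merge_step[OF K'(1) e(1) ew] by blast
      have "subgraph K1 K1'"
        unfolding subgraph_def
      proof (intro conjI ballI)
        show "g_verts K1 \<subseteq> g_verts K1'" using K1'(2) K'(2) del_vertex by simp
        show "g_edges K1 \<subseteq> g_edges K1'"
        proof
          fix f assume "f \<in> g_edges K1"
          then have f: "f \<in> g_edges K" using del_vertex by simp
          have vni: "v \<notin> g_ends K f" using del_vertex f by auto
          have ne: "g_ends K' f \<noteq> {w, v}" using sub(2)[OF f] vni by auto
          have fK': "f \<in> g_edges K'" using sub(1) f by auto
          show "f \<in> g_edges K1'" using K1'(3) fK' ne by blast
        qed
        fix f assume "f \<in> g_edges K1"
        then have f: "f \<in> g_edges K" using del_vertex by simp
        have vni: "v \<notin> g_ends K f" using del_vertex f by auto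
        have "g_ends K' f \<noteq> {w, v}" "v \<notin> g_ends K f" using sub(2)[OF f] vni by auto
        moreover have fK': "f \<in> g_edges K'" using sub(1) f by auto
        ultimately have "g_ends K1' f = rho w v ` g_ends K' f" using K1'(3) by blast
        then have "g_ends K1' f = rho w v ` g_ends K f" using sub(2)[OF f] by simp
        also have "\<dots> = g_ends K f" using \<open>v \<notin> g_ends K f\<close> unfolding rho_def by (auto simp: image_iff)
        finally show "g_ends K1' f = g_ends K1 f" using del_vertex by simp
      qed
      moreover have "g_verts K1' = g_verts K1" using K1'(2) K'(2) del_vertex by simp
      moreover have "usp H + card (g_verts K1) \<le> usp K1' + card (g_verts H)" using K'(4) cardK1 K1'(4) by linarith
      ultimately show ?thesis using K1'(1) by blast
    next
      case False
      have "g_verts K' - {v} \<noteq> {}" "v \<in> g_verts K'" using del_vertex K'(2) by auto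
      then have st: "wf_graph (delete_vertex K' v) \<and> usp K' \<le> usp (delete_vertex K' v) + 1"
        using isolated_step[OF K'(1)] False by blast
      have "subgraph K1 (delete_vertex K' v)" using K'(2,3) del_vertex unfolding subgraph_def by auto
      moreover have "g_verts (delete_vertex K' v) = g_verts K1" using K'(2) del_vertex by simp
      moreover have "usp H + card (g_verts K1) \<le> usp (delete_vertex K' v) + card (g_verts H)"
        using K'(4) cardK1 st by linarith
      ultimately show ?thesis using st by blast
    qed
  next
    case (del_edge e)
    have "subgraph K1 K'" using K'(3) del_edge unfolding subgraph_def by auto
    moreover have "g_verts K' = g_verts K1" using K'(2) del_edge by simp
    moreover have "card (g_verts K1) = card (g_verts K)" using del_edge by simp
    ultimately show ?thesis using K'(1,4) by metis
  next
    case (contract e)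
    define u where "u = Min (g_ends K e)"
    define v where "v = Max (g_ends K e)"
    have eK': "e \<in> g_edges K'" "g_ends K' e = g_ends K e" using sub contract by auto
    have c2: "card (g_ends K e) = 2" and esub: "g_ends K e \<subseteq> g_verts K" using K'(1) eK' K'(2) unfolding wf_graph_def by auto
    obtain a b where ab: "g_ends K e = {a, b}" "a \<noteq> b" using card2_obtain[OF c2] by blast
    have uv: "g_ends K e = {u, v}" "u \<noteq> v" "v \<in> g_verts K"
      using ab esub unfolding u_def v_def by (auto simp: min_def max_def)
    obtain K1' where K1': "wf_graph K1'" "g_verts K1' = g_verts K' - {v}"
      "\<forall>f\<in>g_edges K'. g_ends K' f \<noteq> {u, v} \<longrightarrow> f \<in> g_edges K1' \<and> g_ends K1' f = rho u v ` g_ends K' f"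
      "usp K' \<le> usp K1' + 1"
      using merge_step[OF K'(1) eK'(1)] eK'(2) uv(1) by metis
    have K1: "g_verts K1 = g_verts K - {v}" "g_edges K1 = g_edges K - {e}"
      "g_ends K1 = (\<lambda>f. (\<lambda>x. if x = v then u else x) ` g_ends K f)"
      using contract unfolding contract_edge_def Let_def u_def v_def by auto
    have "0 < card (g_verts K)" using finK uv(3) by (auto simp: card_gt_0_iff)
    then have cardK1: "card (g_verts K) = Suc (card (g_verts K1))"
      using K1(1) uv(3) finK by simp
    have "subgraph K1 K1'"
      unfolding subgraph_def
    proof (intro conjI ballI)
      show "g_verts K1 \<subseteq> g_verts K1'" using K1'(2) K'(2) K1 by simp
      have np: "g_ends K' f \<noteq> {u, v} \<and> f \<in> g_edges K'" if "f \<in> g_edges K1" for f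
      proof -
        have f: "f \<in> g_edges K" "f \<noteq> e" using that K1 by auto
        have "\<not> parallel K e f" using contract by blast
        then have "g_ends K f \<noteq> g_ends K e" using f unfolding parallel_def by auto
        then show ?thesis using sub f uv by auto
      qed
      show "g_edges K1 \<subseteq> g_edges K1'" using np K1'(3) by blast
      fix f assume f: "f \<in> g_edges K1"
      then have "g_ends K1' f = rho u v ` g_ends K' f" using np K1'(3) by blast
      also have "\<dots> = g_ends K1 f" using f K1 sub unfolding rho_def by auto
      finally show "g_ends K1' f = g_ends K1 f" .
    qed
    moreover have "g_verts K1' = g_verts K1" using K1'(2) K'(2) K1 by simp
    moreover have "usp H + card (g_verts K1) \<le> usp K1' + card (g_verts H)" using K'(4) cardK1 K1'(4) by linarith
    ultimately show ?thesis using K1'(1) by blast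
  qed
qed

lemma path_map:
  assumes phi: "bij_betw \<phi> (g_verts A) (g_verts B)" and eta: "bij_betw \<eta> (g_edges A) (g_edges B)"
    and ends: "\<forall>e\<in>g_edges A. g_ends B (\<eta> e) = \<phi> ` g_ends A e"
    and P: "is_path A (vs, es) a b"
  shows "is_path B (map \<phi> vs, map \<eta> es) (\<phi> a) (\<phi> b)"
proof -
  have p: "vs \<noteq> []" "hd vs = a" "last vs = b" "distinct vs" "set vs \<subseteq> g_verts A" "length es + 1 = length vs"
    "\<And>i. i < length es \<Longrightarrow> es ! i \<in> g_edges A \<and> g_ends A (es ! i) = {vs ! i, vs ! Suc i}"
    using P unfolding is_path_def Let_def by auto
  have inj: "inj_on \<phi> (g_verts A)" using phi bij_betw_imp_inj_on by blast
  have im: "\<phi> ` g_verts A = g_verts B" using phi bij_betw_imp_surj_on by blast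
  have "distinct (map \<phi> vs)" using p(4,5) inj by (simp add: distinct_map inj_on_subset)
  moreover have "set (map \<phi> vs) \<subseteq> g_verts B" using p(5) im by auto
  moreover have "\<forall>i<length (map \<eta> es). map \<eta> es ! i \<in> g_edges B \<and>
      g_ends B (map \<eta> es ! i) = {map \<phi> vs ! i, map \<phi> vs ! Suc i}"
  proof (intro allI impI)
    fix i assume "i < length (map \<eta> es)"
    then have i: "i < length es" by simp
    have "\<eta> (es ! i) \<in> g_edges B" using p(7)[OF i] eta bij_betw_imp_surj_on by blast
    moreover have "g_ends B (\<eta> (es ! i)) = {\<phi> (vs ! i), \<phi> (vs ! Suc i)}" using p(7)[OF i] ends by auto
    ultimately show "map \<eta> es ! i \<in> g_edges B \<and> g_ends B (map \<eta> es ! i) = {map \<phi> vs ! i, map \<phi> vs ! Suc i}"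
      using i p(6) by simp
  qed
  ultimately show ?thesis using p unfolding is_path_def Let_def by (simp add: hd_map last_map)
qed

lemma iso_usp:
  assumes wfA: "wf_graph A" and wfB: "wf_graph B"
    and phi: "bij_betw \<phi> (g_verts A) (g_verts B)" and eta: "bij_betw \<eta> (g_edges A) (g_edges B)"
    and ends: "\<forall>e\<in>g_edges A. g_ends B (\<eta> e) = \<phi> ` g_ends A e"
  shows "usp A \<le> usp B"
proof -
  obtain vs es where P: "unique_shortest_path A (vs, es) (hd vs) (last vs)" "length vs = usp A"
    using usp_parade[OF wfA] by blast
  define a where "a = hd vs"
  define b where "b = last vs"
  define \<phi>' where "\<phi>' = inv_into (g_verts A) \<phi>"
  define \<eta>' where "\<eta>' = inv_into (g_edges A) \<eta>"
  have phi': "bij_betw \<phi>' (g_verts B) (g_verts A)" unfolding \<phi>'_def using bij_betw_inv_into[OF phi] .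
  have eta': "bij_betw \<eta>' (g_edges B) (g_edges A)" unfolding \<eta>'_def using bij_betw_inv_into[OF eta] .
  have injp: "inj_on \<phi> (g_verts A)" using phi bij_betw_imp_inj_on by blast
  have imp: "\<phi> ` g_verts A = g_verts B" using phi bij_betw_imp_surj_on by blast
  have ime: "\<eta> ` g_edges A = g_edges B" using eta bij_betw_imp_surj_on by blast
  have ends': "\<forall>e\<in>g_edges B. g_ends A (\<eta>' e) = \<phi>' ` g_ends B e"
  proof
    fix e assume e: "e \<in> g_edges B"
    then have e0: "\<eta>' e \<in> g_edges A" "\<eta> (\<eta>' e) = e" unfolding \<eta>'_def using ime
      by (auto intro: inv_into_into f_inv_into_f)
    have sub: "g_ends A (\<eta>' e) \<subseteq> g_verts A" using wfA e0 unfolding wf_graph_def by auto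
    have "g_ends B e = \<phi> ` g_ends A (\<eta>' e)" using ends e0 by metis
    then have "\<phi>' ` g_ends B e = \<phi>' ` \<phi> ` g_ends A (\<eta>' e)" by simp
    also have "\<dots> = g_ends A (\<eta>' e)" unfolding \<phi>'_def using sub injp
      by (auto simp: image_image inv_into_f_f subsetD)
    finally show "g_ends A (\<eta>' e) = \<phi>' ` g_ends B e" by simp
  qed
  have pA: "is_path A (vs, es) a b" using P(1) unfolding a_def b_def unique_shortest_path_def shortest_path_def by auto
  have aV: "a \<in> g_verts A" "b \<in> g_verts A" using pA unfolding is_path_def Let_def by auto
  have pB: "is_path B (map \<phi> vs, map \<eta> es) (\<phi> a) (\<phi> b)" using path_map[OF phi eta ends pA] .
  have goback: "is_path A (map \<phi>' qs, map \<eta>' gs) a b" if "is_path B (qs, gs) (\<phi> a) (\<phi> b)" for qs gs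
  proof -
    have "is_path A (map \<phi>' qs, map \<eta>' gs) (\<phi>' (\<phi> a)) (\<phi>' (\<phi> b))" using path_map[OF phi' eta' ends' that] .
    then show ?thesis unfolding \<phi>'_def using aV injp by (simp add: inv_into_f_f)
  qed
  have rt: "(map \<phi> (map \<phi>' qs), map \<eta> (map \<eta>' gs)) = (qs, gs)" if "is_path B (qs, gs) x y" for qs gs x y
  proof -
    have "set qs \<subseteq> g_verts B" "set gs \<subseteq> g_edges B" using that unfolding is_path_def Let_def
      by (auto simp: in_set_conv_nth)
    moreover have "map \<phi> (map \<phi>' qs) = qs" if "set qs \<subseteq> g_verts B"
      using that unfolding \<phi>'_def using imp by (induction qs) (auto intro: f_inv_into_f)
    moreover have "map \<eta> (map \<eta>' gs) = gs" if "set gs \<subseteq> g_edges B"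
      using that unfolding \<eta>'_def using ime by (induction gs) (auto intro: f_inv_into_f)
    ultimately show ?thesis by simp
  qed
  have "unique_shortest_path B (map \<phi> vs, map \<eta> es) (\<phi> a) (\<phi> b)"
    unfolding unique_shortest_path_def shortest_path_def
  proof (intro conjI pB allI impI)
    fix Q assume Q: "is_path B Q (\<phi> a) (\<phi> b)"
    obtain qs gs where Qd: "Q = (qs, gs)" by (cases Q)
    have bk: "is_path A (map \<phi>' qs, map \<eta>' gs) a b" using goback[of qs gs] Q Qd by simp
    have "\<forall>Q. is_path A Q a b \<longrightarrow> length (fst (vs, es)) \<le> length (fst Q)"
      using P(1) unfolding a_def b_def unique_shortest_path_def shortest_path_def by blast
    then have "length vs \<le> length (map \<phi>' qs)" using bk by fastforce
    then show "length (fst (map \<phi> vs, map \<eta> es)) \<le> length (fst Q)" using Qd by simp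
  next
    fix Q assume Q: "is_path B Q (\<phi> a) (\<phi> b) \<and> length (fst Q) = length (fst (map \<phi> vs, map \<eta> es))"
    obtain qs gs where Qd: "Q = (qs, gs)" by (cases Q)
    have bk: "is_path A (map \<phi>' qs, map \<eta>' gs) a b" using goback Q Qd by auto
    have "length (fst (map \<phi>' qs, map \<eta>' gs)) = length (fst (vs, es))" using Q Qd by simp
    then have "(map \<phi>' qs, map \<eta>' gs) = (vs, es)" using P(1) bk unfolding a_def b_def unique_shortest_path_def by blast
    then have "(map \<phi> (map \<phi>' qs), map \<eta> (map \<eta>' gs)) = (map \<phi> vs, map \<eta> es)" by simp
    moreover have "(map \<phi> (map \<phi>' qs), map \<eta> (map \<eta>' gs)) = (qs, gs)" using rt[of qs gs] Q Qd by blast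
    ultimately show "Q = (map \<phi> vs, map \<eta> es)" using Qd by simp
  qed
  from usp_ge[OF wfB this] P(2) show ?thesis by simp
qed

lemma del_edges:
  assumes "finite S" "S \<subseteq> g_edges H"
  shows "minor_step\<^sup>*\<^sup>* H (H\<lparr>g_edges := g_edges H - S\<rparr>)"
  using assms
proof (induction S rule: finite_induct)
  case empty
  then show ?case by simp
next
  case (insert x S)
  then have IH: "minor_step\<^sup>*\<^sup>* H (H\<lparr>g_edges := g_edges H - S\<rparr>)" by simp
  have x: "x \<in> g_edges (H\<lparr>g_edges := g_edges H - S\<rparr>)" using insert by simp
  have "minor_step (H\<lparr>g_edges := g_edges H - S\<rparr>) (delete_edge (H\<lparr>g_edges := g_edges H - S\<rparr>) x)"
    using minor_step.del_edge[OF x] .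
  moreover have "delete_edge (H\<lparr>g_edges := g_edges H - S\<rparr>) x = H\<lparr>g_edges := g_edges H - insert x S\<rparr>"
  proof -
    have "g_edges H - S - {x} = g_edges H - insert x S" by blast
    then show ?thesis unfolding delete_edge_def by simp
  qed
  ultimately show ?case using IH by (metis rtranclp.rtrancl_into_rtrancl)
qed

lemma minor_of_super:
  assumes "wf_graph G'" "g_verts G' = g_verts G" "subgraph G G'"
  shows "is_minor G G'"
proof -
  have fin: "finite (g_edges G')" using assms(1) unfolding wf_graph_def by auto
  have sub: "g_edges G \<subseteq> g_edges G'" using assms(3) unfolding subgraph_def by auto
  define G'' where "G'' = G'\<lparr>g_edges := g_edges G' - (g_edges G' - g_edges G)\<rparr>"
  have st: "minor_step\<^sup>*\<^sup>* G' G''" unfolding G''_def using del_edges[OF finite_Diff[OF fin]] by blast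
  have e: "g_edges G'' = g_edges G" unfolding G''_def using sub by auto
  have "graph_iso G G''"
    unfolding graph_iso_def
  proof (intro exI[of _ id] conjI)
    show "bij_betw id (g_verts G) (g_verts G'')" unfolding G''_def using assms(2) by simp
    show "bij_betw id (g_edges G) (g_edges G'')" using e by simp
    show "\<forall>e\<in>g_edges G. g_ends G'' (id e) = id ` g_ends G e"
      unfolding G''_def using assms(3) unfolding subgraph_def by simp
  qed
  then show ?thesis unfolding is_minor_def using st by blast
qed

lemma transport:
  assumes wfG: "wf_graph G" and wfK: "wf_graph K'" and iso: "graph_iso G H0"
    and VK: "g_verts K' = g_verts H0" and sub: "subgraph H0 K'"
  shows "\<exists>G'. wf_graph G' \<and> g_verts G' = g_verts G \<and> subgraph G G' \<and> usp K' \<le> usp G'"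
proof -
  obtain f g where f: "bij_betw f (g_verts G) (g_verts H0)" and g: "bij_betw g (g_edges G) (g_edges H0)"
    and fe: "\<forall>e\<in>g_edges G. g_ends H0 (g e) = f ` g_ends G e"
    using iso unfolding graph_iso_def by blast
  define finv where "finv = inv_into (g_verts G) f"
  define ginv where "ginv = inv_into (g_edges G) g"
  define N0 where "N0 = Suc (Max (insert 0 (g_edges G)))"
  define h where "h e = (if e \<in> g ` g_edges G then ginv e else N0 + e)" for e
  define G' where "G' = \<lparr> g_verts = g_verts G, g_edges = h ` g_edges K',
      g_ends = (\<lambda>l. if l \<in> g_edges G then g_ends G l else finv ` g_ends K' (l - N0)) \<rparr>"
  have finG: "finite (g_edges G)" "finite (g_verts G)" using wfG unfolding wf_graph_def by auto
  have N0: "l < N0" if "l \<in> g_edges G" for l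
  proof -
    have "l \<le> Max (insert 0 (g_edges G))" using Max_ge[of "insert 0 (g_edges G)" l] finG that by simp
    then show ?thesis unfolding N0_def by simp
  qed
  have injf: "inj_on f (g_verts G)" and imf: "f ` g_verts G = g_verts H0" using f unfolding bij_betw_def by auto
  have injg: "inj_on g (g_edges G)" and img: "g ` g_edges G = g_edges H0" using g unfolding bij_betw_def by auto
  have subE: "g_edges H0 \<subseteq> g_edges K'" and subends: "\<And>e. e \<in> g_edges H0 \<Longrightarrow> g_ends K' e = g_ends H0 e"
    using sub unfolding subgraph_def by auto
  have hg: "h (g l) = l" if "l \<in> g_edges G" for l
    unfolding h_def ginv_def using that injg by (simp add: inv_into_f_f)
  have endsG: "g_ends G l \<subseteq> g_verts G" if "l \<in> g_edges G" for l using wfG that unfolding wf_graph_def by auto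
  have hends: "g_ends G' (h e) = finv ` g_ends K' e" if e: "e \<in> g_edges K'" for e
  proof (cases "e \<in> g ` g_edges G")
    case True
    then obtain l where l: "l \<in> g_edges G" "e = g l" by blast
    have "g l \<in> g_edges H0" using l(1) img by auto
    then have "g_ends K' e = g_ends H0 (g l)" using subends l(2) by simp
    also have "\<dots> = f ` g_ends G l" using fe l(1) by simp
    finally have "g_ends K' e = f ` g_ends G l" .
    then have "finv ` g_ends K' e = g_ends G l" unfolding finv_def using endsG[OF l(1)] injf
      by (auto simp: image_image inv_into_f_f subsetD)
    then show ?thesis using hg l unfolding G'_def by simp
  next
    case False
    then have "h e = N0 + e" unfolding h_def by simp
    moreover have "N0 + e \<notin> g_edges G" using N0 by fastforce
    ultimately show ?thesis unfolding G'_def by simp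
  qed
  have injh: "inj_on h (g_edges K')"
  proof (rule inj_onI)
    fix x y assume xy: "x \<in> g_edges K'" "y \<in> g_edges K'" "h x = h y"
    have ginvin: "ginv z \<in> g_edges G" if "z \<in> g ` g_edges G" for z
      unfolding ginv_def using that by (rule inv_into_into)
    have notin: "N0 + z \<notin> g_edges G" for z using N0 by fastforce
    show "x = y"
    proof (cases "x \<in> g ` g_edges G"; cases "y \<in> g ` g_edges G")
      assume a: "x \<in> g ` g_edges G" "y \<in> g ` g_edges G"
      then have "ginv x = ginv y" using xy(3) unfolding h_def by simp
      then show "x = y" using a unfolding ginv_def by (metis f_inv_into_f)
    next
      assume a: "x \<in> g ` g_edges G" "y \<notin> g ` g_edges G"
      then have "ginv x = N0 + y" using xy(3) unfolding h_def by simp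
      then show "x = y" using ginvin[OF a(1)] notin by metis
    next
      assume a: "x \<notin> g ` g_edges G" "y \<in> g ` g_edges G"
      then have "N0 + x = ginv y" using xy(3) unfolding h_def by simp
      then show "x = y" using ginvin[OF a(2)] notin by metis
    next
      assume a: "x \<notin> g ` g_edges G" "y \<notin> g ` g_edges G"
      then show "x = y" using xy(3) unfolding h_def by simp
    qed
  qed
  have bh: "bij_betw h (g_edges K') (g_edges G')" unfolding G'_def using injh by (simp add: bij_betw_imageI)
  have bf: "bij_betw finv (g_verts K') (g_verts G')"
    unfolding G'_def finv_def using bij_betw_inv_into[OF f] VK by simp
  have injfinv: "inj_on finv (g_verts K')" using bf bij_betw_imp_inj_on by blast
  have wfG': "wf_graph G'"
    unfolding wf_graph_def
  proof (intro conjI ballI)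
    show "finite (g_verts G')" "g_verts G' \<noteq> {}" using wfG unfolding G'_def wf_graph_def by auto
    show "finite (g_edges G')" using wfK unfolding G'_def wf_graph_def by auto
    fix l assume "l \<in> g_edges G'"
    then obtain e where e: "e \<in> g_edges K'" "l = h e" unfolding G'_def by auto
    have s: "g_ends K' e \<subseteq> g_verts K'" "card (g_ends K' e) = 2" using wfK e(1) unfolding wf_graph_def by auto
    show "g_ends G' l \<subseteq> g_verts G'" using hends[OF e(1)] e(2) s(1) bf bij_betw_imp_surj_on by blast
    have "card (finv ` g_ends K' e) = card (g_ends K' e)" by (rule card_image[OF inj_on_subset[OF injfinv s(1)]])
    then show "card (g_ends G' l) = 2" using hends[OF e(1)] e(2) s(2) by simp
  qed
  have subG: "subgraph G G'"
    unfolding subgraph_def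
  proof (intro conjI ballI)
    show "g_verts G \<subseteq> g_verts G'" unfolding G'_def by simp
    show "g_edges G \<subseteq> g_edges G'"
    proof
      fix l assume l: "l \<in> g_edges G"
      then have "g l \<in> g_edges K'" using img subE by auto
      then show "l \<in> g_edges G'" unfolding G'_def using hg[OF l] by (metis image_eqI mgraph.select_convs(2))
    qed
    fix l assume "l \<in> g_edges G"
    then show "g_ends G' l = g_ends G l" unfolding G'_def by simp
  qed
  have "usp K' \<le> usp G'" using iso_usp[OF wfK wfG' bf bh] hends by blast
  moreover have "g_verts G' = g_verts G" unfolding G'_def by simp
  ultimately show ?thesis using wfG' subG by blast
qed

theorem theorem2p9:
  assumes "wf_graph G"
  shows "\<exists>G'. wf_graph G' \<and> card (g_verts G') = card (g_verts G) \<and>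
              subgraph G G' \<and> sp_floor G = sp G'"
proof -
  define S where "S = {sp H | H. wf_graph H \<and> is_minor G H}"
  have GG: "is_minor G G" using minor_of_super[OF assms refl] unfolding subgraph_def by simp
  then have "sp G \<in> S" unfolding S_def using assms by blast
  then have "S \<noteq> {}" by blast
  then have "Inf S \<in> S" by (rule Inf_nat_def1)
  then have "\<exists>H0. Inf S = sp H0 \<and> wf_graph H0 \<and> is_minor G H0" unfolding S_def by (simp only: mem_Collect_eq)
  then obtain H0 where H0: "wf_graph H0" "is_minor G H0" "sp H0 = Inf S" by metis
  obtain H0' where st: "minor_step\<^sup>*\<^sup>* H0 H0'" and iso: "graph_iso G H0'" using H0(2) unfolding is_minor_def by blast
  obtain K' where K': "wf_graph K'" "g_verts K' = g_verts H0'" "subgraph H0' K'"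
    "usp H0 + card (g_verts H0') \<le> usp K' + card (g_verts H0)"
    using chain[OF st H0(1)] by blast
  obtain G' where G': "wf_graph G'" "g_verts G' = g_verts G" "subgraph G G'" "usp K' \<le> usp G'"
    using transport[OF assms K'(1) iso K'(2,3)] by blast
  have cG: "card (g_verts G) = card (g_verts H0')"
    using iso unfolding graph_iso_def by (metis bij_betw_same_card)
  have u1: "usp K' \<le> card (g_verts H0')" using usp_le_card[OF K'(1)] K'(2) by simp
  have u2: "usp H0 \<le> card (g_verts H0)" using usp_le_card[OF H0(1)] .
  have cG': "card (g_verts G') = card (g_verts G)" using G'(2) by simp
  have le: "sp G' \<le> Inf S"
    unfolding sp_def using cG' G'(4) cG u1 u2 K'(4) H0(3) unfolding sp_def by linarith
  have "sp G' \<in> S" unfolding S_def using G'(1) minor_of_super[OF G'(1,2,3)] by blast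
  then have "Inf S \<le> sp G'" by (intro cInf_lower) (auto intro: bdd_belowI[of _ 0])
  then have "sp_floor G = sp G'" using le unfolding sp_floor_def S_def by simp
  then show ?thesis using G' by auto
qed

end
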